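(* Assume the setting described in the context (quadratic nonlinearity). Let $f_0\in F$, $T\in(0,+\infty]$, and $\varphi_{ap}\in C([0,T),F)$. Suppose there are nondecreasing continuous functions $\mathcal E,\mathcal D:[0,T]\to[0,+\infty)$ (for $T=+\infty$ their values at $+\infty$ being their limits) such that $\|E(\varphi_{ap})(t)\|\le\mathcal E(t)$ and $\|\varphi_{ap}(t)\|\le\mathcal D(t)$ for all $t\in[0,T)$, where $E(\varphi_{ap})(t):=\varphi_{ap}(t)-e^{t\mathcal A}f_0-\int_0^te^{(t-s)\mathcal A}\mathcal P(\varphi_{ap}(s),s)\,ds$, and $$2\sqrt{K\,\mathcal U(T)\,\mathcal E(T)}+2K\,\mathcal U(T)\,\mathcal D(T)\le1.$$ Then VP$(f_0)$ has a solution $\varphi:[0,T)\to F$ and $\|\varphi(t)-\varphi_{ap}(t)\|\le\mathcal R(t)$ for all $t\in[0,T)$, where $\mathcal R(0):=\mathcal E(0)$ and, for $t\in(0,T)$, $$\mathcal R(t):=\frac{1-2K\mathcal U(t)\mathcal D(t)-\sqrt{(1-2K\mathcal U(t)\mathcal D(t))^2-4K\mathcal U(t)\mathcal E(t)}}{2K\,\mathcal U(t)};$$ this defines a nondecreasing function $\mathcal R\in C([0,T),[0,+\infty))$.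
   Context: Banach spaces over a common field. $X\hookrightarrow Y$ means $X$ is a dense subspace of $Y$ with continuous inclusion. Setting: $F_+,F,F_-$ Banach spaces with norms $\|\cdot\|_+,\|\cdot\|,\|\cdot\|_-$, $F_+\hookrightarrow F\hookrightarrow F_-$; $\mathcal A:F_+\to F_-$ linear with $\|\cdot\|_+$ equivalent on $F_+$ to $\|f\|_-+\|\mathcal Af\|_-$; $\mathcal A$ generates a strongly continuous semigroup $(e^{t\mathcal A})_{t\ge0}$ on $F_-$ (domain $F_+$); $e^{t\mathcal A}(F)\subset F$ ($t\ge0$) with $(f,t)\mapsto e^{t\mathcal A}f$ continuous $F\times[0,\infty)\to F$ and $\|e^{t\mathcal A}f\|\le u(t)\|f\|$ for some $u\in C([0,\infty),(0,\infty))$; $e^{t\mathcal A}(F_-)\subset F$ ($t>0$) with $(f,t)\mapsto e^{t\mathcal A}f$ continuous $F_-\times(0,\infty)\to F$ and $\|e^{t\mathcal A}f\|\le u_-(t)\|f\|_-$ for some $u_-\in C((0,\infty),(0,\infty))$ with $u_-(t)=O(t^{-(1-\sigma)})$ as $t\to0^+$, $\sigma\in(0,1]$. $\mathscr P:F\times F\to F_-$ is bilinear with $\|\mathscr P(f,g)\|_-\le K\|f\|\|g\|$, $K\in(0,\infty)$; $\xi:[0,+\infty)\to F_-$ locally Lipschitz; $\mathcal P(f,t):=\mathscr P(f,f)+\xi(t)$. $\mathcal U\in C([0,+\infty),[0,+\infty))$ is a nondecreasing function with $\int_0^tu_-(s)\,ds\le\mathcal U(t)$ for all $t$ and $\mathcal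 U(0)=0$; $\mathcal U(+\infty):=\lim_{t\to+\infty}\mathcal U(t)$. VP$(f_0)$ asks for $\varphi\in C([0,T),F)$ with $\varphi(t)=e^{t\mathcal A}f_0+\int_0^te^{(t-s)\mathcal A}\mathcal P(\varphi(s),s)\,ds$ for $t\in[0,T)$. *)

theory Defs
  imports "HOL-Analysis.Analysis" "HOL-Library.Landau_Symbols"
begin

definition dense_embedding :: "('a::real_normed_vector \<Rightarrow> 'b::real_normed_vector) \<Rightarrow> bool" where
  "dense_embedding j \<longleftrightarrow> bounded_linear j \<and> inj j \<and> closure (range j) = UNIV"

definition C0_semigroup :: "(real \<Rightarrow> 'm::real_normed_vector \<Rightarrow> 'm) \<Rightarrow> bool" where
  "C0_semigroup S \<longleftrightarrow>
     (\<forall>t\<ge>0. bounded_linear (S t)) \<and> S 0 = id \<and>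
     (\<forall>s\<ge>0. \<forall>t\<ge>0. S (s + t) = S s \<circ> S t) \<and>
     (\<forall>x. continuous_on {0..} (\<lambda>t. S t x))"

text \<open>\<open>S\<close> is generated by \<open>A\<close> with domain \<open>F\<^sub>+\<close> embedded by \<open>jp\<close>: the
  infinitesimal generator has domain exactly \<open>range jp\<close> and acts as \<open>A\<close> there.\<close>
definition generates :: "('p \<Rightarrow> 'm::real_normed_vector) \<Rightarrow> ('p \<Rightarrow> 'm) \<Rightarrow> (real \<Rightarrow> 'm \<Rightarrow> 'm) \<Rightarrow> bool" where
  "generates jp A S \<longleftrightarrow>
     (\<forall>x y. (((\<lambda>h. (1 / h) *\<^sub>R (S h x - x)) \<longlongrightarrow> y) (at_right 0))
            \<longleftrightarrow> (\<exists>p. x = jp p \<and> y = A p))"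

definition loc_lipschitz_nonneg :: "(real \<Rightarrow> 'b::metric_space) \<Rightarrow> bool" where
  "loc_lipschitz_nonneg g \<longleftrightarrow> (\<forall>b\<ge>0. \<exists>L. L-lipschitz_on {0..b} g)"

definition Ico0 :: "ereal \<Rightarrow> real set" where
  "Ico0 T = {t. 0 \<le> t \<and> ereal t < T}"

definition Icc0 :: "ereal \<Rightarrow> real set" where
  "Icc0 T = {t. 0 \<le> t \<and> ereal t \<le> T}"

definition duhamel :: "(real \<Rightarrow> 'm::real_normed_vector \<Rightarrow> 'f::banach) \<Rightarrow> ('f \<Rightarrow> 'f \<Rightarrow> 'm)
     \<Rightarrow> (real \<Rightarrow> 'm) \<Rightarrow> (real \<Rightarrow> 'f) \<Rightarrow> real \<Rightarrow> 'f" where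
  "duhamel Sm P \<xi> \<phi> t = integral {0..t} (\<lambda>s. Sm (t - s) (P (\<phi> s) (\<phi> s) + \<xi> s))"

definition bound_R :: "real \<Rightarrow> (real \<Rightarrow> real) \<Rightarrow> (real \<Rightarrow> real) \<Rightarrow> (real \<Rightarrow> real) \<Rightarrow> real \<Rightarrow> real" where
  "bound_R K U E D t =
     (if t = 0 then E 0
      else (1 - 2 * K * U t * D t - sqrt ((1 - 2 * K * U t * D t)\<^sup>2 - 4 * K * U t * E t))
           / (2 * K * U t))"

end

theory Submission
  imports Defs
begin

lemma improper_right:
  fixes f :: "real \<Rightarrow> 'a::banach"
  assumes ab: "a \<le> b" and fc: "continuous_on {a..<b} f" and hi: "h integrable_on {a..b}"
    and le: "\<And>x. x \<in> {a..<b} \<Longrightarrow> norm (f x) \<le> h x"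
  shows "f integrable_on {a..b} \<and> norm (integral {a..b} f) \<le> integral {a..b} h"
proof (cases "a = b")
  case True
  then show ?thesis using integrable_on_refl[of f b] by simp
next
  case False
  with ab have ab': "a < b" by simp
  define F where "F c = integral {a..c} f" for c
  define H where "H c = integral {a..c} h" for c
  have Hc: "continuous_on {a..b} H" unfolding H_def
    by (rule indefinite_integral_continuous_1[OF hi])
  have fint: "f integrable_on {a..c}" if "c < b" for c
    by (rule integrable_continuous_real, rule continuous_on_subset[OF fc]) (use that in auto)
  have hint: "h integrable_on {c..d}" if "a \<le> c" "d \<le> b" for c d
    by (rule integrable_subinterval_real[OF hi]) (use that in auto)
  have Fdiff: "norm (F d - F c) \<le> H d - H c" if "a \<le> c" "c \<le> d" "d < b" for c d
  proof -
    have fi: "f integrable_on {a..d}" using fint that by auto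
    have "F d = F c + integral {c..d} f" unfolding F_def
      using Henstock_Kurzweil_Integration.integral_combine[where a=a and c=c and b=d and f=f] fi that by auto
    moreover have "H d = H c + integral {c..d} h" unfolding H_def
      using Henstock_Kurzweil_Integration.integral_combine[where a=a and c=c and b=d and f=h] hint[of a d] that by auto
    moreover have "norm (integral {c..d} f) \<le> integral {c..d} h"
      by (rule integral_norm_bound_integral)
         (use that in \<open>auto intro: integrable_subinterval_real[OF fi] hint intro!: le\<close>)
    ultimately show ?thesis by simp
  qed
  have "\<exists>L. (F \<longlongrightarrow> L) (at_left b)"
  proof -
    have "cauchy_filter (filtermap F (at_left b))"
      unfolding cauchy_filter_metric_filtermap
    proof (intro allI impI)
      fix e :: real assume e: "e > 0"
      have "(H \<longlongrightarrow> H b) (at b within {a..b})"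
        using Hc ab by (auto simp: continuous_on_def)
      then have hHb: "(H \<longlongrightarrow> H b) (at_left b)"
        by (simp add: at_within_Icc_at_left[OF ab'])
      have "\<forall>\<^sub>F x in at_left b. dist (H x) (H b) < e/2"
        using tendstoD[OF hHb, of "e/2"] e by simp
      moreover have "\<forall>\<^sub>F x in at_left b. a < x \<and> x < b"
        using eventually_at_left_real[OF ab'] by simp
      ultimately have ev: "\<forall>\<^sub>F x in at_left b. dist (H x) (H b) < e/2 \<and> a < x \<and> x < b"
        by eventually_elim auto
      show "\<exists>P. eventually P (at_left b) \<and> (\<forall>x y. P x \<and> P y \<longrightarrow> dist (F x) (F y) < e)"
      proof (intro exI conjI allI impI)
        show "eventually (\<lambda>x. dist (H x) (H b) < e/2 \<and> a < x \<and> x < b) (at_left b)" by (rule ev)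
        fix x y assume xy: "(dist (H x) (H b) < e/2 \<and> a < x \<and> x < b) \<and> (dist (H y) (H b) < e/2 \<and> a < y \<and> y < b)"
        show "dist (F x) (F y) < e"
        proof (cases "x \<le> y")
          case True
          then have "norm (F y - F x) \<le> H y - H x" using xy by (intro Fdiff) auto
          moreover have "H y - H x \<le> dist (H x) (H b) + dist (H y) (H b)"
            unfolding dist_real_def by linarith
          ultimately show ?thesis using xy by (simp add: dist_norm norm_minus_commute)
        next
          case False
          then have "norm (F x - F y) \<le> H x - H y" using xy by (intro Fdiff) auto
          moreover have "H x - H y \<le> dist (H x) (H b) + dist (H y) (H b)"
            unfolding dist_real_def by linarith
          ultimately show ?thesis using xy by (simp add: dist_norm)
        qed
      qed
    qed
    moreover have "filtermap F (at_left b) \<noteq> bot"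
      by (simp add: filtermap_bot_iff)
    ultimately obtain L where "filtermap F (at_left b) \<le> nhds L"
      using cauchy_filter_complete_converges[of "filtermap F (at_left b)" UNIV] complete_UNIV
      by auto
    then show ?thesis unfolding filterlim_def by blast
  qed
  then obtain L where FL: "(F \<longlongrightarrow> L) (at_left b)" by blast
  define G where "G x = (if x = b then L else F x)" for x
  have Gcont: "continuous_on {a..b} G"
    unfolding continuous_on_def
  proof (intro ballI)
    fix x assume x: "x \<in> {a..b}"
    show "(G \<longlongrightarrow> G x) (at x within {a..b})"
    proof (cases "x = b")
      case True
      have "\<forall>\<^sub>F x in at_left b. F x = G x" by (auto simp: G_def eventually_at_filter)
      then have "(G \<longlongrightarrow> L) (at_left b)"
        using FL by (rule Lim_transform_eventually[rotated])
      then show ?thesis using True by (simp add: G_def at_within_Icc_at_left[OF ab'])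
    next
      case False
      define c where "c = (x + b) / 2"
      have xc: "x < c" "c < b" using x False by (auto simp: c_def)
      have "continuous_on {a..c} F" unfolding F_def
        by (rule indefinite_integral_continuous_1[OF fint[OF xc(2)]])
      then have "(F \<longlongrightarrow> F x) (at x within {a..c})" using x xc by (auto simp: continuous_on_def)
      moreover have "at x within {a..c} = at x within {a..b}"
        by (rule at_within_nhd[of x "{..<c}"]) (use xc x in auto)
      ultimately have "(F \<longlongrightarrow> F x) (at x within {a..b})" by simp
      note FFx = this
      have "\<forall>\<^sub>F y in at x within {a..b}. F y = G y"
        unfolding eventually_at using xc
        by (intro exI[of _ "b - x"]) (auto simp: G_def dist_real_def)
      then have "(G \<longlongrightarrow> F x) (at x within {a..b})"
        using FFx by (rule Lim_transform_eventually[rotated])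
      with False show ?thesis by (simp add: G_def)
    qed
  qed
  have deriv: "(G has_vector_derivative f x) (at x)" if x: "x \<in> {a<..<b} - {}" for x
  proof -
    define c where "c = (x + b) / 2"
    have xc: "x < c" "c < b" "a < x" using x by (auto simp: c_def)
    have fc': "continuous_on {a..c} f"
      by (rule continuous_on_subset[OF fc]) (use xc in auto)
    have "(F has_vector_derivative f x) (at x within {a..c})"
      unfolding F_def by (rule integral_has_vector_derivative[OF fc']) (use xc in auto)
    then have "(F has_vector_derivative f x) (at x)"
      using at_within_Icc_at[of a x c] xc by simp
    then show ?thesis
      by (rule has_vector_derivative_transform_within_open[of _ _ _ "{..<b}"])
         (use xc in \<open>auto simp: G_def\<close>)
  qed
  have "(f has_integral (G b - G a)) {a..b}"
    by (rule fundamental_theorem_of_calculus_interior_strong[of "{}"])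
       (use ab Gcont deriv in auto)
  moreover have "G b = L" "G a = 0" using ab' by (auto simp: G_def F_def)
  ultimately have fL: "(f has_integral L) {a..b}" by simp
  have "norm L \<le> H b"
  proof (rule tendsto_le[of "at_left b" H "H b" "\<lambda>x. norm (F x)"])
    show "at_left b \<noteq> bot" by simp
    show "(H \<longlongrightarrow> H b) (at_left b)"
      using Hc ab' unfolding continuous_on_def
      by (metis at_within_Icc_at_left atLeastAtMost_iff order_refl less_imp_le)
    show "((\<lambda>x. norm (F x)) \<longlongrightarrow> norm L) (at_left b)" using FL by (rule tendsto_norm)
    have "\<forall>\<^sub>F x in at_left b. a < x \<and> x < b"
      using eventually_at_left_real[OF ab'] by simp
    then show "\<forall>\<^sub>F x in at_left b. norm (F x) \<le> H x"
    proof eventually_elim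
      case (elim x)
      then have "norm (F x - F a) \<le> H x - H a" by (intro Fdiff) auto
      then show ?case by (simp add: F_def H_def)
    qed
  qed
  then show ?thesis using fL by (auto simp: H_def integral_unique)
qed

lemma has_integral_reflect_shift:
  fixes f :: "real \<Rightarrow> 'a::real_normed_vector"
  shows "((\<lambda>s. f (c - s)) has_integral i) {a..b} \<longleftrightarrow> (f has_integral i) {c-b..c-a}"
proof -
  have "(f has_integral i) {c-b..c-a} \<longleftrightarrow> ((\<lambda>x. f (-x)) has_integral i) {a-c..b-c}"
    using has_integral_reflect_real[of f i "c-a" "c-b"] by simp
  also have "\<dots> \<longleftrightarrow> ((\<lambda>x. f (- (x + (-c)))) has_integral i) {a-c-(-c)..b-c-(-c)}"
    using has_integral_shift_real_ivl_iff[of "\<lambda>x. f (-x)" i "a-c" "b-c" "-c"] by simp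
  also have "\<dots> \<longleftrightarrow> ((\<lambda>s. f (c - s)) has_integral i) {a..b}" by (simp add: algebra_simps)
  finally show ?thesis by simp
qed

lemma integrable_reflect_shift:
  fixes f :: "real \<Rightarrow> 'a::real_normed_vector"
  shows "(\<lambda>s. f (c - s)) integrable_on {a..b} \<longleftrightarrow> f integrable_on {c-b..c-a}"
  unfolding integrable_on_def using has_integral_reflect_shift by blast

lemma integral_reflect_shift:
  fixes f :: "real \<Rightarrow> 'a::real_normed_vector"
  shows "integral {a..b} (\<lambda>s. f (c - s)) = integral {c-b..c-a} f"
proof (cases "f integrable_on {c-b..c-a}")
  case True
  then show ?thesis using has_integral_reflect_shift[where f=f and c=c and i="integral {c-b..c-a} f" and a=a and b=b]
    by (auto intro: integral_unique)
next
  case False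
  then show ?thesis using integrable_reflect_shift[where f=f and c=c and a=a and b=b] by (simp add: not_integrable_integral)
qed

lemma improper_left:
  fixes f :: "real \<Rightarrow> 'a::banach"
  assumes ab: "a \<le> b" and fc: "continuous_on {a<..b} f" and hi: "h integrable_on {a..b}"
    and le: "\<And>x. x \<in> {a<..b} \<Longrightarrow> norm (f x) \<le> h x"
  shows "f integrable_on {a..b} \<and> norm (integral {a..b} f) \<le> integral {a..b} h"
proof -
  have "(\<lambda>s. f (0 - s)) integrable_on {-b..-a} \<and>
        norm (integral {-b..-a} (\<lambda>s. f (0 - s))) \<le> integral {-b..-a} (\<lambda>s. h (0 - s))"
  proof (rule improper_right)
    show "continuous_on {-b..<-a} (\<lambda>s. f (0 - s))"
      by (rule continuous_on_compose2[OF fc]) (auto intro!: continuous_intros)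
    show "(\<lambda>s. h (0 - s)) integrable_on {-b..-a}" using hi integrable_reflect_shift[where f=h and c=0 and a="-b" and b="-a"] by simp
    show "norm (f (0 - x)) \<le> h (0 - x)" if "x \<in> {-b..<-a}" for x using le that by auto
  qed (use ab in auto)
  then show ?thesis using integrable_reflect_shift[where f=f and c=0 and a="-b" and b="-a"] integral_reflect_shift[where f=f and c=0 and a="-b" and b="-a"]
    integral_reflect_shift[where f=h and c=0 and a="-b" and b="-a"] by simp
qed

lemma um_integrable:
  fixes um :: "real \<Rightarrow> real"
  assumes um_cont: "continuous_on {0<..} um" and um_pos: "\<forall>t>0. um t > 0"
    and \<sigma>: "0 < \<sigma>" and um_sing: "um \<in> O[at_right 0](\<lambda>t. t powr (-(1 - \<sigma>)))"
    and t: "t \<ge> 0"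
  shows "um integrable_on {0..t}"
proof -
  obtain c where c: "c > 0" and ev: "\<forall>\<^sub>F x in at_right 0. norm (um x) \<le> c * norm (x powr (-(1 - \<sigma>)))"
    using um_sing by (elim landau_o.bigE) auto
  obtain d where d: "d > 0" and dd: "\<And>x. 0 < x \<Longrightarrow> x < d \<Longrightarrow> norm (um x) \<le> c * norm (x powr (-(1 - \<sigma>)))"
    using ev unfolding eventually_at_right_field by auto
  define t' where "t' = min t (d/2)"
  have t': "0 \<le> t'" "t' \<le> t" "t' < d" using t d by (auto simp: t'_def)
  have i1: "um integrable_on {0..t'}"
  proof -
    have "um integrable_on {0..t'} \<and> norm (integral {0..t'} um) \<le> integral {0..t'} (\<lambda>x. c * x powr (-(1 - \<sigma>)))"
    proof (rule improper_left)
      show "continuous_on {0<..t'} um" by (rule continuous_on_subset[OF um_cont]) auto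
      show "(\<lambda>x. c * x powr (-(1 - \<sigma>))) integrable_on {0..t'}"
        using integrable_on_powr_from_0[of "-(1-\<sigma>)" t'] \<sigma> t' c by simp
      show "norm (um x) \<le> c * x powr (-(1 - \<sigma>))" if "x \<in> {0<..t'}" for x
        using dd[of x] that t' by auto
    qed (use t' in auto)
    then show ?thesis by simp
  qed
  show ?thesis
  proof (cases "t' = t")
    case True then show ?thesis using i1 by simp
  next
    case False
    then have "0 < t'" using t d by (auto simp: t'_def)
    then have "um integrable_on {t'..t}"
      by (intro integrable_continuous_real continuous_on_subset[OF um_cont]) auto
    then show ?thesis using i1 Henstock_Kurzweil_Integration.integrable_combine[where a=0 and c=t' and b=t and f=um] t' by auto
  qed
qed

locale duh =
  fixes Sm :: "real \<Rightarrow> 'm::real_normed_vector \<Rightarrow> 'f::banach" and um :: "real \<Rightarrow> real"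
  assumes Sm_cont: "continuous_on (UNIV \<times> {0<..}) (\<lambda>(g, t). Sm t g)"
    and Sm_bound: "\<And>t g. t > 0 \<Longrightarrow> norm (Sm t g) \<le> um t * norm g"
    and um_cont: "continuous_on {0<..} um" and um_pos: "\<And>t. t > 0 \<Longrightarrow> um t > 0"
    and um_int: "\<And>t. t \<ge> 0 \<Longrightarrow> um integrable_on {0..t}"
begin

lemma Sm_cont_comp:
  assumes "continuous_on S a" "continuous_on S g" "\<And>x. x \<in> S \<Longrightarrow> a x > 0"
  shows "continuous_on S (\<lambda>x. Sm (a x) (g x))"
proof -
  have "continuous_on S (\<lambda>x. (\<lambda>(g, t). Sm t g) (g x, a x))"
    by (rule continuous_on_compose2[OF Sm_cont]) (use assms in \<open>auto intro!: continuous_intros\<close>)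
  then show ?thesis by simp
qed

lemma kernel_int:
  assumes "a \<le> t"
  shows "(\<lambda>s. um (t - s)) integrable_on {a..t}"
    "integral {a..t} (\<lambda>s. um (t - s)) = integral {0..t-a} um"
  using integrable_reflect_shift[where f=um and c=t and a=a and b=t]
    integral_reflect_shift[where f=um and c=t and a=a and b=t] um_int[of "t-a"] assms by auto

lemma duh_int:
  assumes at: "a \<le> t" and gc: "continuous_on {a..t} g" and wc: "continuous_on {a..t} w"
    and gw: "\<And>s. s \<in> {a..t} \<Longrightarrow> norm (g s) \<le> w s"
  shows "(\<lambda>s. Sm (t - s) (g s)) integrable_on {a..t}"
    "(\<lambda>s. um (t - s) * w s) integrable_on {a..t}"
    "norm (integral {a..t} (\<lambda>s. Sm (t - s) (g s))) \<le> integral {a..t} (\<lambda>s. um (t - s) * w s)"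
proof -
  obtain W where W: "\<forall>s\<in>{a..t}. norm (w s) \<le> W"
    using compact_imp_bounded[OF compact_continuous_image[OF wc]] unfolding bounded_iff by auto
  have umc: "continuous_on {a..<t} (\<lambda>s. um (t - s))"
    by (rule continuous_on_compose2[OF um_cont]) (auto intro!: continuous_intros)
  have hi: "(\<lambda>s. um (t - s) * w s) integrable_on {a..t}"
  proof -
    have "(\<lambda>s. um (t - s) * w s) integrable_on {a..t} \<and> norm (integral {a..t} (\<lambda>s. um (t - s) * w s)) \<le> integral {a..t} (\<lambda>s. W * um (t - s))"
    proof (rule improper_right)
      show "continuous_on {a..<t} (\<lambda>s. um (t - s) * w s)"
        by (intro continuous_intros umc continuous_on_subset[OF wc]) auto
      show "(\<lambda>s. W * um (t - s)) integrable_on {a..t}"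
        using integrable_cmul[OF kernel_int(1)[OF at], of W] by simp
      show "norm (um (t - s) * w s) \<le> W * um (t - s)" if "s \<in> {a..<t}" for s
      proof -
        have "um (t - s) > 0" using that um_pos by auto
        then show ?thesis using W[rule_format, of s] that by (simp add: abs_mult mult.commute mult_left_mono)
      qed
    qed (use at in auto)
    then show ?thesis by simp
  qed
  have "(\<lambda>s. Sm (t - s) (g s)) integrable_on {a..t} \<and> norm (integral {a..t} (\<lambda>s. Sm (t - s) (g s))) \<le> integral {a..t} (\<lambda>s. um (t - s) * w s)"
  proof (rule improper_right[OF at _ hi])
    show "continuous_on {a..<t} (\<lambda>s. Sm (t - s) (g s))"
      by (rule Sm_cont_comp) (auto intro!: continuous_intros continuous_on_subset[OF gc])
    show "norm (Sm (t - s) (g s)) \<le> um (t - s) * w s" if "s \<in> {a..<t}" for s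
    proof -
      have "um (t - s) > 0" using that um_pos by auto
      then show ?thesis using Sm_bound[of "t - s" "g s"] gw[of s] that
        by (smt (verit) atLeastLessThan_iff atLeastAtMost_iff mult_left_mono)
    qed
  qed
  then show "(\<lambda>s. Sm (t - s) (g s)) integrable_on {a..t}"
    "norm (integral {a..t} (\<lambda>s. Sm (t - s) (g s))) \<le> integral {a..t} (\<lambda>s. um (t - s) * w s)"
    by auto
  show "(\<lambda>s. um (t - s) * w s) integrable_on {a..t}" by (rule hi)
qed

end

context duh begin

lemma duh_cont:
  assumes b: "0 \<le> b" and gc: "continuous_on {0..b} g"
  shows "continuous_on {0..b} (\<lambda>t. integral {0..t} (\<lambda>s. Sm (t - s) (g s)))"
proof -
  obtain G0 where G0: "\<forall>s\<in>{0..b}. norm (g s) \<le> G0"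
    using compact_imp_bounded[OF compact_continuous_image[OF gc]] unfolding bounded_iff by auto
  define G where "G = max G0 0"
  have G: "\<And>s. s \<in> {0..b} \<Longrightarrow> norm (g s) \<le> G" "G \<ge> 0"
    using G0 unfolding G_def by (metis max.coboundedI1, simp)
  define V where "V x = integral {0..x} um" for x
  have Vc: "continuous_on {0..b+1} V" unfolding V_def
    by (rule indefinite_integral_continuous_1[OF um_int]) (use b in auto)
  have V0: "V 0 = 0" by (simp add: V_def)
  define F where "F t = integral {0..t} (\<lambda>s. Sm (t - s) (g s))" for t
  define D where "D n t = integral {0..max 0 (t - 1 / real (Suc n))} (\<lambda>s. Sm (t - s) (g s))" for n t
  have Dcont: "continuous_on {0..b} (D n)" for n
  proof -
    define \<delta> where "\<delta> = 1 / real (Suc n)"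
    have \<delta>: "\<delta> > 0" by (simp add: \<delta>_def)
    define m where "m t = max 0 (t - \<delta>)" for t
    define k where "k t u = m t *\<^sub>R Sm (max \<delta> (t - m t * u)) (g (m t * u))" for t u
    have kc: "continuous_on ({0..b} \<times> cbox 0 1) (\<lambda>(t, u). k t u)"
    proof -
      have mc: "continuous_on S (\<lambda>x. m (fst x))" for S :: "(real \<times> real) set"
        unfolding m_def by (intro continuous_intros)
      have "continuous_on ({0..b} \<times> cbox 0 1) (\<lambda>x. m (fst x) *\<^sub>R Sm (max \<delta> (fst x - m (fst x) * snd x)) (g (m (fst x) * snd x)))"
      proof (intro continuous_intros mc Sm_cont_comp)
        show "continuous_on ({0..b} \<times> cbox 0 1) (\<lambda>x. g (m (fst x) * snd x))"
        proof (rule continuous_on_compose2[OF gc])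
          show "continuous_on ({0..b} \<times> cbox 0 1) (\<lambda>x. m (fst x) * snd x)"
            by (intro continuous_intros mc)
          show "(\<lambda>x. m (fst x) * snd x) ` ({0..b} \<times> cbox 0 1) \<subseteq> {0..b}"
          proof clarsimp
            fix t u :: real assume "0 \<le> t" "t \<le> b" "0 \<le> u" "u \<le> 1"
            moreover have "0 \<le> m t" "m t \<le> t" using \<open>0 \<le> t\<close> \<delta> by (auto simp: m_def)
            ultimately show "0 \<le> m t * u \<and> m t * u \<le> b"
              by (smt (verit) mult_left_le mult_nonneg_nonneg)
          qed
        qed
      qed (use \<delta> in auto)
      then show ?thesis by (simp add: k_def case_prod_beta)
    qed
    have pc: "continuous_on {0..b} (\<lambda>t. integral (cbox 0 1) (k t))"
      by (rule integral_continuous_on_param[OF kc])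
    have eq: "D n t = integral (cbox 0 1) (k t)" if t: "t \<in> {0..b}" for t
    proof (cases "m t = 0")
      case True
      then have "D n t = 0" by (simp add: D_def m_def \<delta>_def)
      moreover have "k t = (\<lambda>u. 0)" using True by (auto simp: k_def)
      ultimately show ?thesis by simp
    next
      case False
      then have mt: "m t > 0" "m t = t - \<delta>" by (auto simp: m_def)
      define f where "f = (\<lambda>s. Sm (t - s) (g s))"
      have fc: "continuous_on {0..m t} f" unfolding f_def
      proof (rule Sm_cont_comp)
        show "continuous_on {0..m t} (\<lambda>s. t - s)" by (intro continuous_intros)
        show "continuous_on {0..m t} g" by (rule continuous_on_subset[OF gc]) (use mt t \<delta> in auto)
        show "t - s > 0" if "s \<in> {0..m t}" for s using that mt \<delta> by auto
      qed
      have "(f has_integral integral {0..m t} f) (cbox 0 (m t))"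
        using integrable_continuous_real[OF fc] by (simp add: integrable_integral)
      from has_integral_affinity'[OF this mt(1), of 0]
      have "((\<lambda>u. f (m t * u)) has_integral (integral {0..m t} f /\<^sub>R m t)) (cbox 0 1)"
        using mt by simp
      from has_integral_cmul[OF this, of "m t"]
      have "((\<lambda>u. m t *\<^sub>R f (m t * u)) has_integral integral {0..m t} f) (cbox 0 1)"
        using mt by simp
      moreover have "m t *\<^sub>R f (m t * u) = k t u" if "u \<in> cbox 0 1" for u
      proof -
        have "m t * u \<le> m t" using that mt by (simp add: mult_left_le)
        then have "\<delta> \<le> t - m t * u" using mt(2) by linarith
        then have "max \<delta> (t - m t * u) = t - m t * u" by (rule max_absorb2)
        then show ?thesis by (simp add: k_def f_def)
      qed
      ultimately have "(k t has_integral integral {0..m t} f) (cbox 0 1)"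
        by (rule has_integral_eq[rotated]) simp
      then show ?thesis by (simp add: D_def f_def m_def \<delta>_def integral_unique)
    qed
    show ?thesis using pc by (rule continuous_on_eq) (use eq in auto)
  qed
  have err: "norm (F t - D n t) \<le> G * \<bar>V (min t (1 / real (Suc n)))\<bar>" if t: "t \<in> {0..b}" for n t
  proof -
    define \<delta> where "\<delta> = 1 / real (Suc n)"
    have \<delta>: "\<delta> > 0" by (simp add: \<delta>_def)
    have gct: "continuous_on {a..t} g" if "0 \<le> a" for a
      by (rule continuous_on_subset[OF gc]) (use t that in auto)
    show ?thesis
    proof (cases "t \<le> \<delta>")
      case True
      then have "D n t = 0" by (simp add: D_def \<delta>_def)
      moreover have "norm (F t) \<le> integral {0..t} (\<lambda>s. um (t - s) * G)"
        unfolding F_def by (rule duh_int(3)) (use t G gct in auto)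
      moreover have "integral {0..t} (\<lambda>s. um (t - s)) = V t"
        using kernel_int(2)[of 0 t] t by (simp add: V_def)
      ultimately have "norm (F t - D n t) \<le> G * V t" by (simp add: mult.commute)
      moreover have "G * V t \<le> G * \<bar>V t\<bar>" using G(2) by (simp add: mult_left_mono)
      moreover have "min t (1 / real (Suc n)) = t" using True by (simp add: \<delta>_def)
      ultimately show ?thesis by simp
    next
      case False
      have fi: "(\<lambda>s. Sm (t - s) (g s)) integrable_on {0..t}"
        by (rule duh_int(1)[where w="\<lambda>_. G"]) (use t G gct in auto)
      have "F t = D n t + integral {t - \<delta>..t} (\<lambda>s. Sm (t - s) (g s))"
        unfolding F_def D_def \<delta>_def[symmetric]
        using Henstock_Kurzweil_Integration.integral_combine[where a=0 and c="t - \<delta>" and b=t, OF _ _ fi] False \<delta>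
        by simp
      moreover have "norm (integral {t - \<delta>..t} (\<lambda>s. Sm (t - s) (g s))) \<le> integral {t - \<delta>..t} (\<lambda>s. um (t - s) * G)"
        by (rule duh_int(3)) (use t G gct False \<delta> in auto)
      moreover have "integral {t - \<delta>..t} (\<lambda>s. um (t - s)) = V \<delta>"
        using kernel_int(2)[of "t - \<delta>" t] \<delta> by (simp add: V_def)
      ultimately have "norm (F t - D n t) \<le> G * V \<delta>" by (simp add: mult.commute)
      moreover have "G * V \<delta> \<le> G * \<bar>V \<delta>\<bar>" using G(2) by (simp add: mult_left_mono)
      moreover have "min t (1 / real (Suc n)) = \<delta>" using False by (simp add: \<delta>_def)
      ultimately show ?thesis by simp
    qed
  qed
  have "uniform_limit {0..b} D F sequentially"
    unfolding uniform_limit_iff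
  proof (intro allI impI)
    fix e :: real assume e: "e > 0"
    have "(V \<longlongrightarrow> V 0) (at 0 within {0..b+1})" using Vc b unfolding continuous_on_def by simp
    moreover have e': "e / (G + 1) > 0" using e G(2) by simp
    ultimately have "\<forall>\<^sub>F x in at 0 within {0..b+1}. dist (V x) (V 0) < e / (G + 1)"
      by (rule tendstoD)
    then obtain \<eta> where \<eta>: "\<eta> > 0" and \<eta>': "\<And>x. x \<in> {0..b+1} \<Longrightarrow> x \<noteq> 0 \<Longrightarrow> dist x 0 < \<eta> \<Longrightarrow> dist (V x) (V 0) < e / (G + 1)"
      unfolding eventually_at by blast
    have Vsmall: "G * \<bar>V x\<bar> < e" if "0 \<le> x" "x < \<eta>" "x \<le> 1" for x
    proof (cases "x = 0")
      case True then show ?thesis using V0 e by simp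
    next
      case False
      then have "dist (V x) (V 0) < e / (G + 1)" using that b by (intro \<eta>') (auto simp: dist_real_def)
      then have "\<bar>V x\<bar> < e / (G + 1)" using V0 by (simp add: dist_real_def)
      then have "G * \<bar>V x\<bar> \<le> G * (e / (G + 1))" using G(2) by (intro mult_left_mono) simp_all
      also have "\<dots> = e * (G / (G + 1))" by simp
      also have "\<dots> < e * 1" using G(2) e by (intro mult_strict_left_mono) simp_all
      finally show ?thesis by simp
    qed
    obtain N where N: "1 / real (Suc N) < \<eta>" using reals_Archimedean[OF \<eta>] by (auto simp: inverse_eq_divide)
    show "\<forall>\<^sub>F n in sequentially. \<forall>x\<in>{0..b}. dist (D n x) (F x) < e"
      unfolding eventually_sequentially
    proof (intro exI allI impI ballI)
      fix n t assume n: "N \<le> n" and t: "t \<in> {0..b}"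
      have "1 / real (Suc n) \<le> 1 / real (Suc N)" using n by (intro divide_left_mono) auto
      then have "1 / real (Suc n) < \<eta>" using N by linarith
      moreover have "1 / real (Suc n) \<le> 1" by simp
      ultimately have m1: "min t (1 / real (Suc n)) < \<eta>" "min t (1 / real (Suc n)) \<le> 1"
        by linarith+
      have m2: "0 \<le> min t (1 / real (Suc n))" using t by simp
      have "G * \<bar>V (min t (1 / real (Suc n)))\<bar> < e" by (rule Vsmall[OF m2 m1])
      then show "dist (D n t) (F t) < e" using err[OF t, of n] by (simp add: dist_norm norm_minus_commute)
    qed
  qed
  note ul = this
  have "continuous_on {0..b} F"
    by (rule uniform_limit_theorem[OF _ ul]) (simp_all add: Dcont)
  then show ?thesis by (simp add: F_def)
qed

end

lemma integral_le_spike: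
  fixes f g :: "real \<Rightarrow> real"
  assumes "negligible N" "f integrable_on S" "g integrable_on S" "\<And>x. x \<in> S - N \<Longrightarrow> f x \<le> g x"
  shows "integral S f \<le> integral S g"
proof -
  define f' where "f' x = (if x \<in> N then g x else f x)" for x
  have "integral S f = integral S f'"
    by (rule integral_spike[OF assms(1)]) (auto simp: f'_def)
  moreover have "f' integrable_on S"
    by (rule integrable_spike[OF assms(2) assms(1)]) (auto simp: f'_def)
  moreover have "integral S f' \<le> integral S g"
    by (rule integral_le) (use assms calculation(2) in \<open>auto simp: f'_def\<close>)
  ultimately show ?thesis by simp
qed

context duh begin

lemma um_integral_nonneg: "0 \<le> a \<Longrightarrow> a \<le> b \<Longrightarrow> 0 \<le> integral {a..b} um"
  using integral_le_spike[of "{0}" "\<lambda>_. 0" "{a..b}" um] um_pos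
    integrable_subinterval_real[OF um_int[of b], of a b]
  by (force simp: less_eq_real_def)

lemma um_integral_pos: assumes "0 < t" shows "0 < integral {0..t} um"
proof -
  have "continuous_on {t/2..t} um" by (rule continuous_on_subset[OF um_cont]) (use assms in auto)
  then obtain x0 where x0: "x0 \<in> {t/2..t}" "\<And>y. y \<in> {t/2..t} \<Longrightarrow> um x0 \<le> um y"
    using continuous_attains_inf[of "{t/2..t}" um] assms by auto
  have "um x0 > 0" using x0 assms um_pos by auto
  have i: "um integrable_on {t/2..t}" by (rule integrable_subinterval_real[OF um_int[of t]]) (use assms in auto)
  have "integral {t/2..t} (\<lambda>_. um x0) \<le> integral {t/2..t} um"
    by (rule integral_le) (use x0 i in auto)
  moreover have "integral {t/2..t} (\<lambda>_. um x0) = um x0 * (t / 2)" using assms by simp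
  moreover have "integral {0..t/2} um + integral {t/2..t} um = integral {0..t} um"
    by (rule Henstock_Kurzweil_Integration.integral_combine) (use assms um_int[of t] in auto)
  moreover have "0 \<le> integral {0..t/2} um" by (rule um_integral_nonneg) (use assms in auto)
  ultimately show ?thesis using \<open>um x0 > 0\<close> assms by (smt (verit) mult_pos_pos half_gt_zero)
qed

lemma kernel_le:
  assumes ab: "a \<le> b" "b \<le> t" and wc: "continuous_on {a..b} w" and wW: "\<And>s. s \<in> {a..b} \<Longrightarrow> w s \<le> W"
  shows "(\<lambda>s. um (t - s) * w s) integrable_on {a..b}"
    "integral {a..b} (\<lambda>s. um (t - s) * w s) \<le> W * integral {t-b..t-a} um"
proof -
  have ki: "(\<lambda>s. um (t - s)) integrable_on {a..b}"
    using integrable_reflect_shift[where f=um and c=t and a=a and b=b] um_int[of "t-a"]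
      integrable_subinterval_real[of um 0 "t-a" "t-b" "t-a"] ab by auto
  have kI: "integral {a..b} (\<lambda>s. um (t - s)) = integral {t-b..t-a} um"
    by (rule integral_reflect_shift)
  show i1: "(\<lambda>s. um (t - s) * w s) integrable_on {a..b}"
  proof -
    obtain W' where W': "\<forall>s\<in>{a..b}. norm (w s) \<le> W'"
      using compact_imp_bounded[OF compact_continuous_image[OF wc]] unfolding bounded_iff by auto
    have "(\<lambda>s. um (t - s) * w s) integrable_on {a..b} \<and> norm (integral {a..b} (\<lambda>s. um (t - s) * w s)) \<le> integral {a..b} (\<lambda>s. W' * um (t - s))"
    proof (rule improper_right)
      show "continuous_on {a..<b} (\<lambda>s. um (t - s) * w s)"
        by (intro continuous_intros continuous_on_compose2[OF um_cont] continuous_on_subset[OF wc]) (use ab in auto)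
      show "(\<lambda>s. W' * um (t - s)) integrable_on {a..b}"
        using integrable_cmul[OF ki, of W'] by simp
      show "norm (um (t - s) * w s) \<le> W' * um (t - s)" if "s \<in> {a..<b}" for s
      proof -
        have "um (t - s) > 0" using that um_pos ab by auto
        then show ?thesis using W'[rule_format, of s] that by (simp add: abs_mult mult.commute mult_left_mono)
      qed
    qed (use ab in auto)
    then show ?thesis by simp
  qed
  have "integral {a..b} (\<lambda>s. um (t - s) * w s) \<le> integral {a..b} (\<lambda>s. um (t - s) * W)"
  proof (rule integral_le_spike[of "{b}"])
    show "(\<lambda>s. um (t - s) * W) integrable_on {a..b}" using integrable_cmul[OF ki, of W] by (simp add: mult.commute)
    show "um (t - x) * w x \<le> um (t - x) * W" if "x \<in> {a..b} - {b}" for x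
    proof -
      have "um (t - x) > 0" using that um_pos ab by auto
      then show ?thesis using wW[of x] that by (simp add: mult_left_mono)
    qed
  qed (use i1 in auto)
  also have "\<dots> = W * integral {t-b..t-a} um" using kI by (simp add: mult.commute)
  finally show "integral {a..b} (\<lambda>s. um (t - s) * w s) \<le> W * integral {t-b..t-a} um" .
qed

end

locale mainloc = duh Sm um for Sm :: "real \<Rightarrow> 'm::real_normed_vector \<Rightarrow> 'f::banach" and um +
  fixes SF :: "real \<Rightarrow> 'f \<Rightarrow> 'f" and P :: "'f \<Rightarrow> 'f \<Rightarrow> 'm" and K :: real and \<xi> :: "real \<Rightarrow> 'm"
    and U :: "real \<Rightarrow> real" and f0 :: 'f and I :: "real set" and \<phi>ap :: "real \<Rightarrow> 'f"
    and E D :: "real \<Rightarrow> real" and UT ET DT :: real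
  assumes Sm_lin: "\<And>t. t > 0 \<Longrightarrow> linear (Sm t)"
    and SFc: "continuous_on I (\<lambda>t. SF t f0)"
    and P_bilin: "bilinear P" and K_pos: "0 < K"
    and P_bound: "\<And>f g. norm (P f g) \<le> K * norm f * norm g"
    and \<xi>c: "\<And>b. b \<in> I \<Longrightarrow> continuous_on {0..b} \<xi>"
    and I0: "0 \<in> I" and Idown: "\<And>t s. t \<in> I \<Longrightarrow> 0 \<le> s \<Longrightarrow> s \<le> t \<Longrightarrow> s \<in> I"
    and Iup: "\<And>t. t \<in> I \<Longrightarrow> \<exists>b\<in>I. t < b" and Ipos: "\<And>t. t \<in> I \<Longrightarrow> 0 \<le> t"
    and U_cont: "continuous_on I U" and U_mono: "mono_on I U"
    and U_int: "\<And>t. t \<in> I \<Longrightarrow> integral {0..t} um \<le> U t" and U_0: "U 0 = 0"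
    and U_T: "\<And>t. t \<in> I \<Longrightarrow> U t \<le> UT"
    and \<phi>ap_cont: "continuous_on I \<phi>ap"
    and E_cont: "continuous_on I E" and E_mono: "mono_on I E" and E_nonneg: "\<And>t. t \<in> I \<Longrightarrow> 0 \<le> E t"
    and E_T: "\<And>t. t \<in> I \<Longrightarrow> E t \<le> ET"
    and D_cont: "continuous_on I D" and D_mono: "mono_on I D" and D_nonneg: "\<And>t. t \<in> I \<Longrightarrow> 0 \<le> D t"
    and D_T: "\<And>t. t \<in> I \<Longrightarrow> D t \<le> DT"
    and err_bound: "\<And>t. t \<in> I \<Longrightarrow> norm (\<phi>ap t - SF t f0 - duhamel Sm P \<xi> \<phi>ap t) \<le> E t"
    and ap_bound: "\<And>t. t \<in> I \<Longrightarrow> norm (\<phi>ap t) \<le> D t"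
    and small: "2 * sqrt (K * UT * ET) + 2 * K * UT * DT \<le> 1"
begin

definition R where "R = bound_R K U E D"
definition aa where "aa t = 1 - 2 * K * U t * D t" for t
definition dd where "dd t = (aa t)\<^sup>2 - 4 * K * U t * E t" for t

lemma U_nonneg: "t \<in> I \<Longrightarrow> 0 \<le> U t"
  using U_int[of t] um_integral_nonneg[of 0 t] Ipos[of t] by linarith

lemma U_pos: "t \<in> I \<Longrightarrow> 0 < t \<Longrightarrow> 0 < U t"
  using U_int[of t] um_integral_pos[of t] by linarith

lemma small_t:
  assumes t: "t \<in> I"
  shows "2 * sqrt (K * U t * E t) + 2 * K * U t * D t \<le> 1"
proof -
  have "K * U t * E t \<le> K * UT * ET"
    using K_pos U_nonneg[OF t] E_nonneg[OF t] U_T[OF t] E_T[OF t]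
    by (intro mult_mono) (auto intro: order_trans)
  then have "sqrt (K * U t * E t) \<le> sqrt (K * UT * ET)" by simp
  moreover have "K * U t * D t \<le> K * UT * DT"
    using K_pos U_nonneg[OF t] D_nonneg[OF t] U_T[OF t] D_T[OF t]
    by (intro mult_mono) (auto intro: order_trans)
  ultimately show ?thesis using small by linarith
qed

lemma aa_ge: "t \<in> I \<Longrightarrow> 2 * sqrt (K * U t * E t) \<le> aa t"
  using small_t[of t] by (simp add: aa_def)

lemma aa_nonneg: "t \<in> I \<Longrightarrow> 0 \<le> aa t"
proof -
  assume t: "t \<in> I"
  have "0 \<le> K * U t * E t" using K_pos U_nonneg[OF t] E_nonneg[OF t] by simp
  then have "0 \<le> sqrt (K * U t * E t)" by simp
  then show ?thesis using aa_ge[OF t] by linarith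
qed

lemma dd_nonneg: "t \<in> I \<Longrightarrow> 0 \<le> dd t"
proof -
  assume t: "t \<in> I"
  have kue: "0 \<le> K * U t * E t" using K_pos U_nonneg[OF t] E_nonneg[OF t] by simp
  have "(2 * sqrt (K * U t * E t))\<^sup>2 \<le> (aa t)\<^sup>2"
    using aa_ge[OF t] kue by (intro power_mono) auto
  then show ?thesis using kue by (simp add: dd_def power_mult_distrib)
qed

lemma sqrt_dd_le: "t \<in> I \<Longrightarrow> sqrt (dd t) \<le> aa t"
proof -
  assume t: "t \<in> I"
  have "dd t \<le> (aa t)\<^sup>2" using K_pos U_nonneg[OF t] E_nonneg[OF t] by (simp add: dd_def)
  then have "sqrt (dd t) \<le> sqrt ((aa t)\<^sup>2)" by (rule real_sqrt_le_mono)
  moreover have "sqrt ((aa t)\<^sup>2) = aa t" using aa_nonneg[OF t] by simp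
  ultimately show ?thesis by simp
qed

lemma R_pos_formula: "t \<in> I \<Longrightarrow> 0 < t \<Longrightarrow> R t = (aa t - sqrt (dd t)) / (2 * K * U t)"
  by (simp add: R_def bound_R_def aa_def dd_def)

lemma R_formula2: assumes t: "t \<in> I" shows "R t = 2 * E t / (aa t + sqrt (dd t))"
proof (cases "t = 0")
  case True
  then show ?thesis by (simp add: R_def bound_R_def aa_def dd_def U_0)
next
  case False
  then have tp: "0 < t" using Ipos[OF t] by simp
  have Up: "0 < U t" by (rule U_pos[OF t tp])
  have d0: "0 \<le> dd t" by (rule dd_nonneg[OF t])
  have prod: "(aa t - sqrt (dd t)) * (aa t + sqrt (dd t)) = 4 * K * U t * E t"
    using d0 by (simp add: dd_def algebra_simps power2_eq_square)
  show ?thesis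
  proof (cases "aa t + sqrt (dd t) = 0")
    case True
    moreover have "0 \<le> sqrt (dd t)" using d0 by simp
    ultimately have "aa t = 0" "sqrt (dd t) = 0" using aa_nonneg[OF t] by linarith+
    then have "E t = 0" using prod K_pos Up by simp
    then show ?thesis using R_pos_formula[OF t tp] \<open>aa t = 0\<close> \<open>sqrt (dd t) = 0\<close> by simp
  next
    case False
    have "R t = (aa t - sqrt (dd t)) / (2 * K * U t)" by (rule R_pos_formula[OF t tp])
    also have "\<dots> = (aa t - sqrt (dd t)) * (aa t + sqrt (dd t)) / (2 * K * U t * (aa t + sqrt (dd t)))"
      using False by simp
    also have "\<dots> = 2 * E t / (aa t + sqrt (dd t))"
    proof -
      have "4 * K * U t * E t = (2 * K * U t) * (2 * E t)" by simp
      moreover have "2 * K * U t \<noteq> 0" using K_pos Up by simp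
      ultimately have "(aa t - sqrt (dd t)) * (aa t + sqrt (dd t)) / (2 * K * U t * (aa t + sqrt (dd t)))
          = ((2 * K * U t) * (2 * E t)) / ((2 * K * U t) * (aa t + sqrt (dd t)))"
        unfolding prod by simp
      also have "\<dots> = 2 * E t / (aa t + sqrt (dd t))"
        by (rule mult_divide_mult_cancel_left) (use K_pos Up in simp)
      finally show ?thesis .
    qed
    finally show ?thesis .
  qed
qed

lemma R_nonneg: "t \<in> I \<Longrightarrow> 0 \<le> R t"
  using R_formula2[of t] E_nonneg[of t] aa_nonneg[of t] dd_nonneg[of t] by simp

lemma R_identity: assumes t: "t \<in> I" shows "R t = E t + K * U t * ((R t)\<^sup>2 + 2 * R t * D t)"
proof (cases "t = 0")
  case True
  then show ?thesis by (simp add: R_def bound_R_def U_0)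
next
  case False
  then have tp: "0 < t" using Ipos[OF t] by simp
  have Up: "0 < U t" by (rule U_pos[OF t tp])
  have d0: "0 \<le> dd t" by (rule dd_nonneg[OF t])
  have "2 * K * U t * R t = aa t - sqrt (dd t)" using R_pos_formula[OF t tp] K_pos Up by simp
  then have "(2 * K * U t * R t - aa t)\<^sup>2 = dd t" using d0 by simp
  then have "4 * (K * U t) * (K * U t * (R t)\<^sup>2 - aa t * R t + E t) = 0"
    by (simp add: dd_def power2_eq_square algebra_simps)
  then have "K * U t * (R t)\<^sup>2 - aa t * R t + E t = 0" using K_pos Up by simp
  then show ?thesis by (simp add: aa_def algebra_simps power2_eq_square)
qed

lemma KUR_le: assumes t: "t \<in> I" shows "2 * K * U t * (R t + D t) \<le> 1"
proof (cases "t = 0")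
  case True then show ?thesis by (simp add: U_0)
next
  case False
  then have tp: "0 < t" using Ipos[OF t] by simp
  have Up: "0 < U t" by (rule U_pos[OF t tp])
  have "2 * K * U t * R t = aa t - sqrt (dd t)" using R_pos_formula[OF t tp] K_pos Up by simp
  moreover have "2 * K * U t * (R t + D t) = 2 * K * U t * R t + 2 * K * U t * D t" by (simp add: algebra_simps)
  moreover have "0 \<le> sqrt (dd t)" using dd_nonneg[OF t] by simp
  ultimately show ?thesis by (simp add: aa_def)
qed

end

context mainloc begin

lemma R_props: "(\<exists>Rmax. \<forall>t\<in>I. R t \<le> Rmax) \<and> continuous_on I R \<and> mono_on I R"
proof (cases "ET = 0")
  case True
  then have "E t = 0" if "t \<in> I" for t using E_nonneg[OF that] E_T[OF that] by simp
  then have R0: "R t = 0" if "t \<in> I" for t using R_formula2[OF that] that by simp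
  have "continuous_on I R" by (rule continuous_on_eq[OF continuous_on_const]) (use R0 in auto)
  moreover have "mono_on I R" by (intro mono_onI) (simp add: R0)
  ultimately show ?thesis using R0 by auto
next
  case False
  then have ETp: "0 < ET" using E_nonneg[OF I0] E_T[OF I0] by simp
  obtain b where b: "b \<in> I" "0 < b" using Iup[OF I0] by auto
  have UTp: "0 < UT" using U_pos[OF b] U_T[OF b(1)] by simp
  have "0 < sqrt (K * UT * ET)" using K_pos UTp ETp by simp
  then have a0p: "0 < 1 - 2 * K * UT * DT" using small by linarith
  define a0 where "a0 = 1 - 2 * K * UT * DT"
  have aa_a0: "a0 \<le> aa t" if t: "t \<in> I" for t
  proof -
    have "U t * D t \<le> UT * DT"
      using U_nonneg[OF t] D_nonneg[OF t] U_T[OF t] D_T[OF t] by (intro mult_mono) auto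
    then have "K * (U t * D t) \<le> K * (UT * DT)" using K_pos by simp
    then show ?thesis by (simp add: a0_def aa_def algebra_simps)
  qed
  have den: "a0 \<le> aa t + sqrt (dd t)" if t: "t \<in> I" for t
    using aa_a0[OF t] dd_nonneg[OF t] by (smt (verit) real_sqrt_ge_zero)
  have a0pos: "0 < a0" using a0p by (simp add: a0_def)
  have bound: "R t \<le> 2 * ET / a0" if t: "t \<in> I" for t
    unfolding R_formula2[OF t]
    by (rule frac_le) (use E_T[OF t] E_nonneg[OF t] ETp a0pos den[OF t] in auto)
  have cont: "continuous_on I R"
  proof (rule continuous_on_eq)
    show "continuous_on I (\<lambda>t. 2 * E t / (aa t + sqrt (dd t)))"
      unfolding aa_def dd_def
      by (intro continuous_intros U_cont D_cont E_cont)
         (use den a0pos in \<open>force simp: aa_def dd_def\<close>)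
    show "\<And>x. x \<in> I \<Longrightarrow> 2 * E x / (aa x + sqrt (dd x)) = R x" using R_formula2 by simp
  qed
  have mono: "mono_on I R"
  proof (intro mono_onI)
    fix s t assume s: "s \<in> I" and t: "t \<in> I" and st: "s \<le> t"
    have Es: "E s \<le> E t" using mono_onD[OF E_mono s t st] .
    have Us: "U s \<le> U t" using mono_onD[OF U_mono s t st] .
    have Ds: "D s \<le> D t" using mono_onD[OF D_mono s t st] .
    have "U s * D s \<le> U t * D t" using Us Ds U_nonneg[OF s] D_nonneg[OF s] by (intro mult_mono) (auto intro: order_trans)
    then have "K * (U s * D s) \<le> K * (U t * D t)" using K_pos by simp
    then have as: "aa t \<le> aa s" by (simp add: aa_def algebra_simps)
    have "(aa t)\<^sup>2 \<le> (aa s)\<^sup>2" using as aa_nonneg[OF t] by (intro power_mono) auto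
    moreover have "U s * E s \<le> U t * E t" using Us Es U_nonneg[OF s] E_nonneg[OF s] by (intro mult_mono) (auto intro: order_trans)
    then have "K * (U s * E s) \<le> K * (U t * E t)" using K_pos by simp
    ultimately have "dd t \<le> dd s" by (simp add: dd_def algebra_simps)
    then have "sqrt (dd t) \<le> sqrt (dd s)" by simp
    then have dens: "aa t + sqrt (dd t) \<le> aa s + sqrt (dd s)" using as by linarith
    show "R s \<le> R t"
      unfolding R_formula2[OF s] R_formula2[OF t]
      by (rule frac_le) (use Es E_nonneg[OF s] den[OF t] a0pos dens in auto)
  qed
  show ?thesis using bound cont mono by blast
qed

end

context mainloc begin

definition N where "N \<phi> s = P (\<phi> s) (\<phi> s) + \<xi> s" for \<phi> :: "real \<Rightarrow> 'f"
definition \<Gamma> where "\<Gamma> \<phi> t = SF t f0 + duhamel Sm P \<xi> \<phi> t" for \<phi> :: "real \<Rightarrow> 'f"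
definition L where "L t = 2 * K * (R t + D t)" for t
definition inB where "inB \<phi> \<longleftrightarrow> continuous_on I \<phi> \<and> (\<forall>t\<in>I. norm (\<phi> t - \<phi>ap t) \<le> R t)"

lemma duhamel_N: "duhamel Sm P \<xi> \<phi> t = integral {0..t} (\<lambda>s. Sm (t - s) (N \<phi> s))"
  by (simp add: duhamel_def N_def)

lemma P_bb: "bounded_bilinear P"
  unfolding bounded_bilinear_def
  using bilinear_ladd[OF P_bilin] bilinear_radd[OF P_bilin] bilinear_lmul[OF P_bilin] bilinear_rmul[OF P_bilin]
    P_bound by (auto intro!: exI[of _ K] simp: ac_simps)

lemma sub_I: "b \<in> I \<Longrightarrow> {0..b} \<subseteq> I"
  using Idown by auto

lemma cont_I:
  assumes "\<And>b. b \<in> I \<Longrightarrow> continuous_on {0..b} f"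
  shows "continuous_on I f"
  unfolding continuous_on_def
proof
  fix t assume t: "t \<in> I"
  obtain b where b: "b \<in> I" "t < b" using Iup[OF t] by auto
  have "(f \<longlongrightarrow> f t) (at t within {0..b})" using assms[OF b(1)] t b Ipos[OF t]
    unfolding continuous_on_def by simp
  moreover have "at t within {0..b} = at t within I"
  proof (rule at_within_nhd[of t "{..<b}"])
    show "{0..b} \<inter> {..<b} - {t} = I \<inter> {..<b} - {t}"
      using Idown[OF b(1)] Ipos by auto
  qed (use b in auto)
  ultimately show "(f \<longlongrightarrow> f t) (at t within I)" by simp
qed

lemma \<xi>cI: "continuous_on I \<xi>"
  by (rule cont_I[OF \<xi>c])

lemma N_cont: "continuous_on I \<phi> \<Longrightarrow> continuous_on I (N \<phi>)"
  unfolding N_def by (intro continuous_intros bounded_bilinear.continuous_on[OF P_bb] \<xi>cI)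

lemma Sm_diff: "s > 0 \<Longrightarrow> Sm s x - Sm s y = Sm s (x - y)"
  using Sm_lin[of s] by (simp add: linear_diff)

lemma duh_integrable:
  assumes "continuous_on I \<phi>" "t \<in> I"
  shows "(\<lambda>s. Sm (t - s) (N \<phi> s)) integrable_on {0..t}"
proof (rule duh_int(1))
  show "continuous_on {0..t} (N \<phi>)" by (rule continuous_on_subset[OF N_cont[OF assms(1)] sub_I[OF assms(2)]])
  then show "continuous_on {0..t} (\<lambda>s. norm (N \<phi> s))" by (intro continuous_intros)
qed (use assms Ipos in auto)

lemma \<Gamma>_cont: "continuous_on I \<phi> \<Longrightarrow> continuous_on I (\<Gamma> \<phi>)"
proof -
  assume \<phi>c: "continuous_on I \<phi>"
  have "continuous_on I (\<lambda>t. duhamel Sm P \<xi> \<phi> t)"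
  proof (rule cont_I)
    fix b assume b: "b \<in> I"
    show "continuous_on {0..b} (duhamel Sm P \<xi> \<phi>)"
      unfolding duhamel_N
      by (rule duh_cont) (use b Ipos continuous_on_subset[OF N_cont[OF \<phi>c] sub_I[OF b]] in auto)
  qed
  then show ?thesis unfolding \<Gamma>_def by (intro continuous_intros SFc)
qed

lemma duh_diff:
  assumes \<phi>c: "continuous_on I \<phi>" and \<psi>c: "continuous_on I \<psi>" and t: "t \<in> I"
    and wc: "continuous_on {0..t} w" and w: "\<And>s. s \<in> {0..t} \<Longrightarrow> norm (N \<phi> s - N \<psi> s) \<le> w s"
  shows "norm (duhamel Sm P \<xi> \<phi> t - duhamel Sm P \<xi> \<psi> t) \<le> integral {0..t} (\<lambda>s. um (t - s) * w s)"
proof -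
  have t0: "0 \<le> t" using Ipos[OF t] .
  have gc: "continuous_on {0..t} (\<lambda>s. N \<phi> s - N \<psi> s)"
    using continuous_on_subset[OF N_cont[OF \<phi>c] sub_I[OF t]] continuous_on_subset[OF N_cont[OF \<psi>c] sub_I[OF t]]
    by (intro continuous_intros)
  have hi: "(\<lambda>s. um (t - s) * w s) integrable_on {0..t}"
    by (rule duh_int(2)[OF t0 gc wc w])
  have "duhamel Sm P \<xi> \<phi> t - duhamel Sm P \<xi> \<psi> t = integral {0..t} (\<lambda>s. Sm (t - s) (N \<phi> s) - Sm (t - s) (N \<psi> s))"
    unfolding duhamel_N
    by (rule integral_diff[symmetric]) (use duh_integrable \<phi>c \<psi>c t in auto)
  also have "norm \<dots> \<le> integral {0..t} (\<lambda>s. um (t - s) * w s)"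
  proof -
    have "(\<lambda>s. Sm (t - s) (N \<phi> s) - Sm (t - s) (N \<psi> s)) integrable_on {0..t} \<and>
      norm (integral {0..t} (\<lambda>s. Sm (t - s) (N \<phi> s) - Sm (t - s) (N \<psi> s))) \<le> integral {0..t} (\<lambda>s. um (t - s) * w s)"
    proof (rule improper_right[OF t0 _ hi])
      have sub: "{0..<t} \<subseteq> I" using sub_I[OF t] by auto
      have c1: "continuous_on {0..<t} (N \<phi>)" "continuous_on {0..<t} (N \<psi>)"
        using continuous_on_subset[OF N_cont[OF \<phi>c] sub] continuous_on_subset[OF N_cont[OF \<psi>c] sub] by auto
      show "continuous_on {0..<t} (\<lambda>s. Sm (t - s) (N \<phi> s) - Sm (t - s) (N \<psi> s))"
        by (intro continuous_intros Sm_cont_comp c1) auto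
      show "norm (Sm (t - s) (N \<phi> s) - Sm (t - s) (N \<psi> s)) \<le> um (t - s) * w s" if s: "s \<in> {0..<t}" for s
      proof -
        have ts: "t - s > 0" using s by auto
        have "norm (Sm (t - s) (N \<phi> s) - Sm (t - s) (N \<psi> s)) = norm (Sm (t - s) (N \<phi> s - N \<psi> s))"
          by (simp add: Sm_diff[OF ts])
        also have "\<dots> \<le> um (t - s) * norm (N \<phi> s - N \<psi> s)" by (rule Sm_bound[OF ts])
        also have "\<dots> \<le> um (t - s) * w s" using w[of s] s um_pos[OF ts] by (intro mult_left_mono) auto
        finally show ?thesis .
      qed
    qed
    then show ?thesis by simp
  qed
  finally show ?thesis .
qed

lemma N_diff: "N \<phi> s - N \<psi> s = P (\<phi> s - \<psi> s) (\<phi> s) + P (\<psi> s) (\<phi> s - \<psi> s)"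
  unfolding N_def using bilinear_lsub[OF P_bilin] bilinear_rsub[OF P_bilin] by simp

lemma N_diff2: "N \<phi> s - N \<psi> s = P (\<phi> s - \<psi> s) (\<phi> s - \<psi> s) + P (\<phi> s - \<psi> s) (\<psi> s) + P (\<psi> s) (\<phi> s - \<psi> s)"
  unfolding N_diff using bilinear_rsub[OF P_bilin, of "\<phi> s - \<psi> s" "\<phi> s" "\<psi> s"] by (simp add: algebra_simps)

lemma lemmaA:
  assumes B: "inB \<phi>" and t: "t \<in> I"
  shows "norm (\<Gamma> \<phi> t - \<phi>ap t) \<le> R t"
proof -
  have \<phi>c: "continuous_on I \<phi>" using B by (simp add: inB_def)
  define C where "C = K * ((R t)\<^sup>2 + 2 * R t * D t)"
  have C0: "0 \<le> C" using K_pos R_nonneg[OF t] D_nonneg[OF t] by (simp add: C_def)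
  have Nb: "norm (N \<phi> s - N \<phi>ap s) \<le> C" if s: "s \<in> {0..t}" for s
  proof -
    have sI: "s \<in> I" using sub_I[OF t] s by auto
    have ps: "norm (\<phi> s - \<phi>ap s) \<le> R s" using B sI by (simp add: inB_def)
    have Rs: "R s \<le> R t" using R_props s sI t by (auto dest: mono_onD)
    have Ds: "D s \<le> D t" using mono_onD[OF D_mono sI t] s by auto
    have Rs0: "0 \<le> R s" by (rule R_nonneg[OF sI])
    have as: "norm (\<phi>ap s) \<le> D s" by (rule ap_bound[OF sI])
    let ?d = "\<phi> s - \<phi>ap s"
    have "norm (N \<phi> s - N \<phi>ap s) \<le> norm (P ?d ?d) + norm (P ?d (\<phi>ap s)) + norm (P (\<phi>ap s) ?d)"
      unfolding N_diff2 using norm_triangle_ineq[of "P ?d ?d + P ?d (\<phi>ap s)" "P (\<phi>ap s) ?d"]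
        norm_triangle_ineq[of "P ?d ?d" "P ?d (\<phi>ap s)"] by linarith
    also have "\<dots> \<le> K * norm ?d * norm ?d + K * norm ?d * norm (\<phi>ap s) + K * norm (\<phi>ap s) * norm ?d"
      by (intro add_mono P_bound)
    also have "\<dots> = K * ((norm ?d)\<^sup>2 + 2 * norm ?d * norm (\<phi>ap s))" by (simp add: algebra_simps power2_eq_square)
    also have "\<dots> \<le> K * ((R t)\<^sup>2 + 2 * R t * D t)"
    proof -
      have "norm ?d \<le> R t" using ps Rs by linarith
      then have "(norm ?d)\<^sup>2 \<le> (R t)\<^sup>2" by (intro power_mono) auto
      moreover have "norm ?d * norm (\<phi>ap s) \<le> R t * D t"
        using \<open>norm ?d \<le> R t\<close> as Ds R_nonneg[OF t] by (intro mult_mono) auto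
      ultimately show ?thesis using K_pos by (intro mult_left_mono) auto
    qed
    finally show ?thesis by (simp add: C_def)
  qed
  have "norm (duhamel Sm P \<xi> \<phi> t - duhamel Sm P \<xi> \<phi>ap t) \<le> integral {0..t} (\<lambda>s. um (t - s) * C)"
    by (rule duh_diff[OF \<phi>c \<phi>ap_cont t]) (use Nb in auto)
  also have "\<dots> \<le> C * integral {t - t..t - 0} um"
    by (rule kernel_le(2)) (use Ipos[OF t] in auto)
  also have "\<dots> \<le> C * U t" using U_int[OF t] C0 by (simp add: mult_left_mono)
  finally have dd: "norm (duhamel Sm P \<xi> \<phi> t - duhamel Sm P \<xi> \<phi>ap t) \<le> C * U t" .
  have "\<Gamma> \<phi> t - \<phi>ap t = (duhamel Sm P \<xi> \<phi> t - duhamel Sm P \<xi> \<phi>ap t) - (\<phi>ap t - SF t f0 - duhamel Sm P \<xi> \<phi>ap t)"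
    by (simp add: \<Gamma>_def algebra_simps)
  then have "norm (\<Gamma> \<phi> t - \<phi>ap t) = norm ((duhamel Sm P \<xi> \<phi> t - duhamel Sm P \<xi> \<phi>ap t) - (\<phi>ap t - SF t f0 - duhamel Sm P \<xi> \<phi>ap t))"
    by (simp only:)
  also have "\<dots> \<le> C * U t + E t"
    using dd err_bound[OF t] norm_triangle_ineq4[of "duhamel Sm P \<xi> \<phi> t - duhamel Sm P \<xi> \<phi>ap t" "\<phi>ap t - SF t f0 - duhamel Sm P \<xi> \<phi>ap t"]
    by linarith
  also have "\<dots> = R t" using R_identity[OF t] by (simp add: C_def algebra_simps)
  finally show ?thesis .
qed

lemma lemmaB:
  assumes B1: "inB \<phi>" and B2: "inB \<psi>" and t: "t \<in> I"
    and M: "\<And>s. s \<in> {0..t} \<Longrightarrow> norm (\<phi> s - \<psi> s) \<le> M * exp (lam * s)"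
  shows "norm (\<Gamma> \<phi> t - \<Gamma> \<psi> t) \<le> L t * M * integral {0..t} (\<lambda>s. um (t - s) * exp (lam * s))"
proof -
  have \<phi>c: "continuous_on I \<phi>" and \<psi>c: "continuous_on I \<psi>" using B1 B2 by (auto simp: inB_def)
  have Nb: "norm (N \<phi> s - N \<psi> s) \<le> L t * M * exp (lam * s)" if s: "s \<in> {0..t}" for s
  proof -
    have sI: "s \<in> I" using sub_I[OF t] s by auto
    have Rs: "R s \<le> R t" using R_props s sI t by (auto dest: mono_onD)
    have Ds: "D s \<le> D t" using mono_onD[OF D_mono sI t] s by auto
    have n1: "norm (\<phi> s) \<le> R t + D t"
    proof -
      have "norm (\<phi> s - \<phi>ap s) \<le> R s" using B1 sI unfolding inB_def by auto
      then show ?thesis using ap_bound[OF sI] Rs Ds norm_triangle_sub[of "\<phi> s" "\<phi>ap s"] by linarith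
    qed
    have n2: "norm (\<psi> s) \<le> R t + D t"
    proof -
      have "norm (\<psi> s - \<phi>ap s) \<le> R s" using B2 sI unfolding inB_def by auto
      then show ?thesis using ap_bound[OF sI] Rs Ds norm_triangle_sub[of "\<psi> s" "\<phi>ap s"] by linarith
    qed
    let ?d = "\<phi> s - \<psi> s"
    have "norm (N \<phi> s - N \<psi> s) \<le> norm (P ?d (\<phi> s)) + norm (P (\<psi> s) ?d)"
      unfolding N_diff by (rule norm_triangle_ineq)
    also have "\<dots> \<le> K * norm ?d * norm (\<phi> s) + K * norm (\<psi> s) * norm ?d"
      by (intro add_mono P_bound)
    also have "\<dots> = K * norm ?d * (norm (\<phi> s) + norm (\<psi> s))" by (simp add: algebra_simps)
    also have "\<dots> \<le> K * norm ?d * (2 * (R t + D t))"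
      using n1 n2 K_pos by (intro mult_left_mono) auto
    also have "\<dots> = L t * norm ?d" by (simp add: L_def algebra_simps)
    also have "\<dots> \<le> L t * (M * exp (lam * s))"
      using M[OF s] K_pos R_nonneg[OF t] D_nonneg[OF t] by (intro mult_left_mono) (auto simp: L_def)
    finally show ?thesis by simp
  qed
  have "norm (\<Gamma> \<phi> t - \<Gamma> \<psi> t) = norm (duhamel Sm P \<xi> \<phi> t - duhamel Sm P \<xi> \<psi> t)"
    by (simp add: \<Gamma>_def)
  also have "\<dots> \<le> integral {0..t} (\<lambda>s. um (t - s) * (L t * M * exp (lam * s)))"
    by (rule duh_diff[OF \<phi>c \<psi>c t]) (use Nb in \<open>auto intro!: continuous_intros\<close>)
  also have "(\<lambda>s. um (t - s) * (L t * M * exp (lam * s))) = (\<lambda>s. (L t * M) * (um (t - s) * exp (lam * s)))"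
    by (rule ext) (simp add: algebra_simps)
  also have "integral {0..t} \<dots> = L t * M * integral {0..t} (\<lambda>s. um (t - s) * exp (lam * s))"
    by (rule integral_mult_right)
  finally show ?thesis .
qed

end

context mainloc begin

lemma L_nonneg: "t \<in> I \<Longrightarrow> 0 \<le> L t"
  using K_pos R_nonneg[of t] D_nonneg[of t] by (simp add: L_def)

lemma LU_le: "t \<in> I \<Longrightarrow> L t * U t \<le> 1"
  using KUR_le[of t] by (simp add: L_def algebra_simps)

lemma kernel_weighted:
  "\<exists>lam c. 0 \<le> lam \<and> 0 \<le> c \<and> c < 1 \<and>
     (\<forall>t\<in>I. L t * integral {0..t} (\<lambda>s. um (t - s) * exp (lam * s)) \<le> c * exp (lam * t))"
proof -
  obtain Rmax where Rmax: "\<And>t. t \<in> I \<Longrightarrow> R t \<le> Rmax" using R_props by blast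
  define Lmax where "Lmax = 2 * K * (Rmax + DT)"
  have Lle: "L t \<le> Lmax" if t: "t \<in> I" for t
    using Rmax[OF t] D_T[OF t] K_pos by (simp add: L_def Lmax_def)
  have Lmax0: "0 \<le> Lmax" using Lle[OF I0] L_nonneg[OF I0] by simp
  define \<epsilon> where "\<epsilon> = 1 / (4 * (Lmax + 1))"
  have \<epsilon>0: "0 < \<epsilon>" using Lmax0 by (simp add: \<epsilon>_def)
  have "(U \<longlongrightarrow> U 0) (at 0 within I)" using U_cont I0 unfolding continuous_on_def by simp
  then have "\<forall>\<^sub>F x in at 0 within I. dist (U x) (U 0) < \<epsilon>" using \<epsilon>0 by (rule tendstoD)
  then obtain \<eta> where \<eta>: "\<eta> > 0" and \<eta>': "\<And>x. x \<in> I \<Longrightarrow> x \<noteq> 0 \<Longrightarrow> dist x 0 < \<eta> \<Longrightarrow> dist (U x) (U 0) < \<epsilon>"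
    unfolding eventually_at by blast
  obtain b where b: "b \<in> I" "0 < b" using Iup[OF I0] by auto
  define \<delta> where "\<delta> = min b (\<eta> / 2)"
  have \<delta>: "0 < \<delta>" "\<delta> \<in> I" using b \<eta> Idown[OF b(1), of \<delta>] by (auto simp: \<delta>_def)
  have U\<delta>: "U \<delta> < \<epsilon>" using \<eta>'[OF \<delta>(2)] \<delta> \<eta> U_0 U_nonneg[OF \<delta>(2)] by (auto simp: \<delta>_def dist_real_def)
  have LU\<delta>: "Lmax * U \<delta> \<le> 1/4"
  proof -
    have "Lmax * U \<delta> \<le> Lmax * \<epsilon>" using U\<delta> Lmax0 by (intro mult_left_mono) auto
    also have "\<dots> = Lmax / (4 * (Lmax + 1))" by (simp add: \<epsilon>_def)
    also have "\<dots> \<le> 1/4" using Lmax0 by (simp add: divide_simps)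
    finally show ?thesis .
  qed
  define lam where "lam = ln 2 / \<delta>"
  have lam0: "0 \<le> lam" using \<delta> by (simp add: lam_def)
  have exp\<delta>: "exp (lam * (t - \<delta>)) = exp (lam * t) / 2" for t
  proof -
    have "lam * \<delta> = ln 2" using \<delta> by (simp add: lam_def)
    then have "exp (lam * (t - \<delta>)) = exp (lam * t) / exp (ln 2)"
      by (simp add: right_diff_distrib exp_diff)
    then show ?thesis by simp
  qed
  have main: "L t * integral {0..t} (\<lambda>s. um (t - s) * exp (lam * s)) \<le> 3/4 * exp (lam * t)" if t: "t \<in> I" for t
  proof -
    have t0: "0 \<le> t" using Ipos[OF t] .
    have Lt0: "0 \<le> L t" by (rule L_nonneg[OF t])
    have ec: "continuous_on S (\<lambda>s. exp (lam * s))" for S by (intro continuous_intros)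
    have expmono: "exp (lam * s) \<le> exp (lam * t')" if "s \<le> t'" for s t' using that lam0 by (simp add: mult_left_mono)
    let ?J = "integral {0..t} (\<lambda>s. um (t - s) * exp (lam * s))"
    show ?thesis
    proof (cases "t \<le> \<delta>")
      case True
      have "?J \<le> exp (lam * t) * integral {t - t..t - 0} um"
        by (rule kernel_le(2)) (use t0 ec expmono in auto)
      also have "\<dots> \<le> exp (lam * t) * U \<delta>"
      proof -
        have "integral {0..t} um \<le> U t" by (rule U_int[OF t])
        also have "\<dots> \<le> U \<delta>" using mono_onD[OF U_mono t \<delta>(2) True] .
        finally show ?thesis by simp
      qed
      finally have J: "?J \<le> exp (lam * t) * U \<delta>" .
      have "L t * ?J \<le> L t * (exp (lam * t) * U \<delta>)" using J Lt0 by (rule mult_left_mono)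
      also have "\<dots> \<le> Lmax * (exp (lam * t) * U \<delta>)"
        using Lle[OF t] U_nonneg[OF \<delta>(2)] by (intro mult_right_mono) auto
      also have "\<dots> = (Lmax * U \<delta>) * exp (lam * t)" by simp
      also have "\<dots> \<le> 1/4 * exp (lam * t)" using LU\<delta> by (intro mult_right_mono) auto
      also have "\<dots> \<le> 3/4 * exp (lam * t)" by simp
      finally show ?thesis .
    next
      case False
      have i1: "(\<lambda>s. um (t - s) * exp (lam * s)) integrable_on {0..t}"
        by (rule kernel_le(1)[where W="exp (lam * t)"]) (use t0 ec expmono in auto)
      have split: "?J = integral {0..t-\<delta>} (\<lambda>s. um (t - s) * exp (lam * s)) + integral {t-\<delta>..t} (\<lambda>s. um (t - s) * exp (lam * s))"
        using Henstock_Kurzweil_Integration.integral_combine[where a=0 and c="t-\<delta>" and b=t, OF _ _ i1] False \<delta> by simp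
      have J1: "integral {0..t-\<delta>} (\<lambda>s. um (t - s) * exp (lam * s)) \<le> exp (lam * (t - \<delta>)) * integral {t - (t-\<delta>)..t - 0} um"
        by (rule kernel_le(2)) (use False \<delta> ec expmono in auto)
      have J2: "integral {t-\<delta>..t} (\<lambda>s. um (t - s) * exp (lam * s)) \<le> exp (lam * t) * integral {t - t..t - (t - \<delta>)} um"
        by (rule kernel_le(2)) (use False \<delta> ec expmono in auto)
      have I1: "integral {\<delta>..t} um \<le> U t"
      proof -
        have "integral {0..\<delta>} um + integral {\<delta>..t} um = integral {0..t} um"
          by (rule Henstock_Kurzweil_Integration.integral_combine) (use False \<delta> um_int[OF t0] in auto)
        moreover have "0 \<le> integral {0..\<delta>} um" by (rule um_integral_nonneg) (use \<delta> in auto)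
        ultimately show ?thesis using U_int[OF t] by linarith
      qed
      have I2: "integral {0..\<delta>} um \<le> U \<delta>" by (rule U_int[OF \<delta>(2)])
      have e0: "0 \<le> exp (lam * t)" by simp
      have "?J \<le> exp (lam * t) / 2 * U t + exp (lam * t) * U \<delta>"
      proof -
        have "exp (lam * (t - \<delta>)) * integral {t - (t-\<delta>)..t - 0} um \<le> exp (lam * t) / 2 * U t"
          using I1 by (simp add: exp\<delta>)
        moreover have "exp (lam * t) * integral {t - t..t - (t - \<delta>)} um \<le> exp (lam * t) * U \<delta>"
          using I2 by (simp add: mult_left_mono)
        ultimately show ?thesis using split J1 J2 by linarith
      qed
      then have "L t * ?J \<le> L t * (exp (lam * t) / 2 * U t + exp (lam * t) * U \<delta>)"
        using Lt0 by (rule mult_left_mono)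
      also have "\<dots> = exp (lam * t) * ((L t * U t) / 2 + L t * U \<delta>)" by (simp add: algebra_simps)
      also have "\<dots> \<le> exp (lam * t) * (1 / 2 + 1 / 4)"
      proof (rule mult_left_mono[OF _ e0])
        have "L t * U \<delta> \<le> Lmax * U \<delta>" using Lle[OF t] U_nonneg[OF \<delta>(2)] by (rule mult_right_mono)
        then show "(L t * U t) / 2 + L t * U \<delta> \<le> 1 / 2 + 1 / 4" using LU_le[OF t] LU\<delta> by linarith
      qed
      also have "\<dots> = 3/4 * exp (lam * t)" by simp
      finally show ?thesis .
    qed
  qed
  show ?thesis by (rule exI[of _ lam], rule exI[of _ "3/4"]) (use lam0 main in auto)
qed

end

context mainloc begin

lemma inB_\<Gamma>: "inB \<phi> \<Longrightarrow> inB (\<Gamma> \<phi>)"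
  using \<Gamma>_cont lemmaA by (auto simp: inB_def)

lemma inB_ap: "inB \<phi>ap"
  using \<phi>ap_cont R_nonneg by (auto simp: inB_def)

theorem exists_fp: "\<exists>\<phi>. inB \<phi> \<and> (\<forall>t\<in>I. \<Gamma> \<phi> t = \<phi> t)"
proof -
  obtain lam c where lam: "0 \<le> lam" and c: "0 \<le> c" "c < 1"
    and kw: "\<And>t. t \<in> I \<Longrightarrow> L t * integral {0..t} (\<lambda>s. um (t - s) * exp (lam * s)) \<le> c * exp (lam * t)"
    using kernel_weighted by blast
  obtain Rmax where Rmax: "\<And>t. t \<in> I \<Longrightarrow> R t \<le> Rmax" using R_props by blast
  define Rm where "Rm = max Rmax 0"
  have Rm: "0 \<le> Rm" "\<And>t. t \<in> I \<Longrightarrow> R t \<le> Rm" using Rmax by (auto simp: Rm_def intro: le_max_iff_disj[THEN iffD2])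
  define ps where "ps n = (\<Gamma> ^^ n) \<phi>ap" for n
  have ps0: "ps 0 = \<phi>ap" and psS: "ps (Suc n) = \<Gamma> (ps n)" for n by (simp_all add: ps_def)
  have psB: "inB (ps n)" for n
    by (induction n) (simp_all add: ps0 psS inB_ap inB_\<Gamma>)
  define d where "d n t = ps (Suc n) t - ps n t" for n t
  have exp1: "1 \<le> exp (lam * t)" if "t \<in> I" for t using lam Ipos[OF that] by simp
  have dbound: "\<forall>t\<in>I. norm (d n t) \<le> Rm * c ^ n * exp (lam * t)" for n
  proof (induction n)
    case 0
    show ?case
    proof
      fix t assume t: "t \<in> I"
      have "norm (d 0 t) \<le> R t" using lemmaA[OF inB_ap t] by (simp add: d_def ps0 psS)
      also have "\<dots> \<le> Rm" by (rule Rm(2)[OF t])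
      also have "\<dots> \<le> Rm * exp (lam * t)" using Rm(1) exp1[OF t] by (simp add: mult_le_cancel_left1)
      finally show "norm (d 0 t) \<le> Rm * c ^ 0 * exp (lam * t)" by simp
    qed
  next
    case (Suc n)
    show ?case
    proof
      fix t assume t: "t \<in> I"
      have M: "norm (ps (Suc n) s - ps n s) \<le> (Rm * c ^ n) * exp (lam * s)" if "s \<in> {0..t}" for s
        using Suc[rule_format, of s] that sub_I[OF t] by (auto simp: d_def)
      have "norm (d (Suc n) t) = norm (\<Gamma> (ps (Suc n)) t - \<Gamma> (ps n) t)" by (simp add: d_def psS)
      also have "\<dots> \<le> L t * (Rm * c ^ n) * integral {0..t} (\<lambda>s. um (t - s) * exp (lam * s))"
        by (rule lemmaB[OF psB psB t M])
      also have "\<dots> = (Rm * c ^ n) * (L t * integral {0..t} (\<lambda>s. um (t - s) * exp (lam * s)))" by simp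
      also have "\<dots> \<le> (Rm * c ^ n) * (c * exp (lam * t))"
        using kw[OF t] Rm(1) c by (intro mult_left_mono) auto
      also have "\<dots> = Rm * c ^ Suc n * exp (lam * t)" by simp
      finally show "norm (d (Suc n) t) \<le> Rm * c ^ Suc n * exp (lam * t)" .
    qed
  qed
  have geo: "summable (\<lambda>n. K' * c ^ n)" for K' using c by (intro summable_mult summable_geometric) simp
  have dsum: "summable (\<lambda>n. d n t)" if t: "t \<in> I" for t
  proof (rule summable_comparison_test'[OF geo[of "Rm * exp (lam * t)"]])
    fix n :: nat
    have "norm (d n t) \<le> Rm * c ^ n * exp (lam * t)" using dbound[of n] t by blast
    also have "\<dots> = Rm * exp (lam * t) * c ^ n" by (simp add: algebra_simps)
    finally show "norm (d n t) \<le> Rm * exp (lam * t) * c ^ n" .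
  qed
  define \<phi> where "\<phi> t = \<phi>ap t + (\<Sum>n. d n t)" for t
  have ps_sum: "ps n t = \<phi>ap t + (\<Sum>k<n. d k t)" for n t
    unfolding d_def using sum_lessThan_telescope[of "\<lambda>k. ps k t" n] by (simp add: ps0)
  have \<phi>c: "continuous_on I \<phi>"
  proof (rule cont_I)
    fix b assume b: "b \<in> I"
    have ul: "uniform_limit {0..b} (\<lambda>n x. \<Sum>i<n. d i x) (\<lambda>x. suminf (\<lambda>i. d i x)) sequentially"
    proof (rule Weierstrass_m_test[OF _ geo[of "Rm * exp (lam * b)"]])
      fix n x assume x: "x \<in> {0..b}"
      then have xI: "x \<in> I" using sub_I[OF b] by auto
      have "norm (d n x) \<le> Rm * c ^ n * exp (lam * x)" using dbound xI by auto
      also have "\<dots> \<le> Rm * c ^ n * exp (lam * b)" using x lam Rm(1) c by (intro mult_left_mono) (auto simp: mult_left_mono)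
      finally show "norm (d n x) \<le> Rm * exp (lam * b) * c ^ n" by (simp add: ac_simps)
    qed
    have "continuous_on {0..b} (\<lambda>x. suminf (\<lambda>i. d i x))"
    proof (rule uniform_limit_theorem[OF _ ul])
      have "continuous_on {0..b} (ps n)" for n using psB[of n] sub_I[OF b] by (auto simp: inB_def intro: continuous_on_subset)
      then show "\<forall>\<^sub>F n in sequentially. continuous_on {0..b} (\<lambda>x. \<Sum>i<n. d i x)"
        unfolding d_def by (intro always_eventually allI continuous_intros) auto
    qed simp
    then show "continuous_on {0..b} \<phi>" unfolding \<phi>_def
      using psB[of 0] sub_I[OF b] by (intro continuous_intros) (auto simp: ps0 inB_def intro: continuous_on_subset)
  qed
  have conv: "(\<lambda>n. ps n t) \<longlonglongrightarrow> \<phi> t" if t: "t \<in> I" for t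
    unfolding ps_sum \<phi>_def by (intro tendsto_add tendsto_const summable_LIMSEQ dsum t)
  have tail: "norm (\<phi> s - ps n s) \<le> (Rm * c ^ n / (1 - c)) * exp (lam * s)" if s: "s \<in> I" for s n
  proof -
    have "\<phi> s - ps n s = (\<Sum>k. d (k + n) s)"
      using suminf_split_initial_segment[OF dsum[OF s], of n] by (simp add: \<phi>_def ps_sum)
    also have "norm \<dots> \<le> (\<Sum>k. (Rm * exp (lam * s) * c ^ n) * c ^ k)"
    proof (rule norm_suminf_le)
      show "norm (d (k + n) s) \<le> Rm * exp (lam * s) * c ^ n * c ^ k" for k
      proof -
        have "norm (d (k + n) s) \<le> Rm * c ^ (k + n) * exp (lam * s)" using dbound[of "k + n"] s by blast
        also have "\<dots> = Rm * exp (lam * s) * c ^ n * c ^ k" by (simp add: power_add algebra_simps)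
        finally show ?thesis .
      qed
    qed (rule geo)
    also have "\<dots> = (Rm * exp (lam * s) * c ^ n) * (1 / (1 - c))"
      using c by (simp add: suminf_mult suminf_geometric summable_geometric)
    also have "\<dots> = (Rm * c ^ n / (1 - c)) * exp (lam * s)" by (simp add: algebra_simps)
    finally show ?thesis .
  qed
  have \<phi>B: "inB \<phi>"
    unfolding inB_def
  proof (intro conjI ballI \<phi>c)
    fix t assume t: "t \<in> I"
    have "(\<lambda>n. norm (ps n t - \<phi>ap t)) \<longlonglongrightarrow> norm (\<phi> t - \<phi>ap t)"
      by (intro tendsto_norm tendsto_diff conv t tendsto_const)
    moreover have "\<forall>n. norm (ps n t - \<phi>ap t) \<le> R t" using psB t by (auto simp: inB_def)
    ultimately show "norm (\<phi> t - \<phi>ap t) \<le> R t" by (intro LIMSEQ_le_const2) auto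
  qed
  have fix\<phi>: "\<Gamma> \<phi> t = \<phi> t" if t: "t \<in> I" for t
  proof -
    have bnd: "norm (ps (Suc n) t - \<Gamma> \<phi> t) \<le> (Rm * c ^ n / (1 - c)) * (c * exp (lam * t))" for n
    proof -
      have M: "norm (\<phi> s - ps n s) \<le> (Rm * c ^ n / (1 - c)) * exp (lam * s)" if "s \<in> {0..t}" for s
      proof -
        have "s \<in> I" using that sub_I[OF t] by auto
        then show ?thesis by (rule tail)
      qed
      have "norm (ps (Suc n) t - \<Gamma> \<phi> t) = norm (\<Gamma> \<phi> t - \<Gamma> (ps n) t)" by (simp add: psS norm_minus_commute)
      also have "\<dots> \<le> L t * (Rm * c ^ n / (1 - c)) * integral {0..t} (\<lambda>s. um (t - s) * exp (lam * s))"
        by (rule lemmaB[OF \<phi>B psB t M])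
      also have "\<dots> = (Rm * c ^ n / (1 - c)) * (L t * integral {0..t} (\<lambda>s. um (t - s) * exp (lam * s)))"
        by (simp only: mult.commute mult.left_commute)
      also have "\<dots> \<le> (Rm * c ^ n / (1 - c)) * (c * exp (lam * t))"
        using kw[OF t] Rm(1) c by (intro mult_left_mono) auto
      finally show ?thesis .
    qed
    define C where "C = Rm / (1 - c) * (c * exp (lam * t))"
    have bnd': "norm (ps (Suc n) t - \<Gamma> \<phi> t) \<le> C * c ^ n" for n
    proof -
      have "(Rm * c ^ n / (1 - c)) * (c * exp (lam * t)) = C * c ^ n" by (simp add: C_def)
      then show ?thesis using bnd[of n] by simp
    qed
    have "(\<lambda>n. c ^ n) \<longlonglongrightarrow> 0" by (rule LIMSEQ_power_zero) (use c in simp)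
    then have lim: "(\<lambda>n. C * c ^ n) \<longlonglongrightarrow> 0" by (rule tendsto_mult_right_zero)
    have "(\<lambda>n. ps (Suc n) t - \<Gamma> \<phi> t) \<longlonglongrightarrow> 0"
      by (rule Lim_null_comparison[OF always_eventually[OF allI[OF bnd']] lim])
    then have "(\<lambda>n. (ps (Suc n) t - \<Gamma> \<phi> t) + \<Gamma> \<phi> t) \<longlonglongrightarrow> 0 + \<Gamma> \<phi> t"
      by (intro tendsto_add tendsto_const)
    then have "(\<lambda>n. ps (Suc n) t) \<longlonglongrightarrow> \<Gamma> \<phi> t" by (simp only: diff_add_cancel add_0)
    moreover have "(\<lambda>n. ps (Suc n) t) \<longlonglongrightarrow> \<phi> t" using conv[OF t] by (rule LIMSEQ_Suc)
    ultimately show ?thesis by (rule LIMSEQ_unique)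
  qed
  show ?thesis using \<phi>B fix\<phi> by blast
qed

theorem main_result:
  "\<exists>\<phi>. continuous_on I \<phi> \<and>
     (\<forall>t\<in>I. (\<lambda>s. Sm (t - s) (P (\<phi> s) (\<phi> s) + \<xi> s)) integrable_on {0..t}
             \<and> \<phi> t = SF t f0 + duhamel Sm P \<xi> \<phi> t) \<and>
     (\<forall>t\<in>I. norm (\<phi> t - \<phi>ap t) \<le> R t)"
proof -
  obtain \<phi> where B: "inB \<phi>" and fp: "\<And>t. t \<in> I \<Longrightarrow> \<Gamma> \<phi> t = \<phi> t" using exists_fp by blast
  have \<phi>c: "continuous_on I \<phi>" using B by (simp add: inB_def)
  show ?thesis
  proof (intro exI conjI ballI)
    show "continuous_on I \<phi>" by (rule \<phi>c)
  next
    fix t assume t: "t \<in> I"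
    show "(\<lambda>s. Sm (t - s) (P (\<phi> s) (\<phi> s) + \<xi> s)) integrable_on {0..t}"
      using duh_integrable[OF \<phi>c t] by (simp add: N_def)
    show "\<phi> t = SF t f0 + duhamel Sm P \<xi> \<phi> t" using fp[OF t] by (simp add: \<Gamma>_def)
    show "norm (\<phi> t - \<phi>ap t) \<le> R t" using B t by (simp add: inB_def)
  qed
qed

end

lemma le_T:
  fixes f :: "real \<Rightarrow> real"
  assumes mono: "mono_on (Icc0 T) f" and fin: "\<forall>r. T = ereal r \<longrightarrow> FT = f r"
    and inf: "T = \<infinity> \<longrightarrow> (f \<longlongrightarrow> FT) at_top" and T: "T > 0" and t: "t \<in> Ico0 T"
  shows "f t \<le> FT"
proof (cases T)
  case (real r)
  then have "t \<le> r" "0 \<le> t" using t by (auto simp: Ico0_def)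
  then have "f t \<le> f r" using real by (intro mono_onD[OF mono]) (auto simp: Icc0_def)
  then show ?thesis using fin real by simp
next
  case PInf
  have "\<forall>\<^sub>F x in at_top. f t \<le> f x"
    using eventually_ge_at_top[of t]
  proof eventually_elim
    case (elim x)
    then show ?case using t PInf by (intro mono_onD[OF mono]) (auto simp: Icc0_def Ico0_def)
  qed
  then show ?thesis using inf PInf by (intro tendsto_lowerbound[of f FT at_top]) auto
next
  case MInf
  then show ?thesis using T by simp
qed

lemma Sm_linear_from:
  fixes jf :: "'f::real_normed_vector \<Rightarrow> 'm::real_normed_vector"
  assumes jf: "linear jf" "inj jf" and St: "linear (St :: 'm \<Rightarrow> 'm)" and r: "\<And>g. jf (Sm g) = St g"
  shows "linear Sm"
proof (rule linearI)
  fix x y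
  have "jf (Sm (x + y)) = jf (Sm x + Sm y)"
    using r linear_add[OF St] linear_add[OF jf(1)] by simp
  then show "Sm (x + y) = Sm x + Sm y" using jf(2) by (simp add: inj_eq)
next
  fix c :: real and x
  have "jf (Sm (c *\<^sub>R x)) = jf (c *\<^sub>R Sm x)"
    using r linear_scale[OF St] linear_scale[OF jf(1)] by simp
  then show "Sm (c *\<^sub>R x) = c *\<^sub>R Sm x" using jf(2) by (simp add: inj_eq)
qed

theorem proposition5p6:
  fixes jp :: "'p::banach \<Rightarrow> 'f::banach"
    and jf :: "'f \<Rightarrow> 'm::banach"
    and A :: "'p \<Rightarrow> 'm"
    and S :: "real \<Rightarrow> 'm \<Rightarrow> 'm"
    and SF :: "real \<Rightarrow> 'f \<Rightarrow> 'f"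
    and Sm :: "real \<Rightarrow> 'm \<Rightarrow> 'f"
    and u :: "real \<Rightarrow> real" and um :: "real \<Rightarrow> real" and \<sigma> :: real
    and P :: "'f \<Rightarrow> 'f \<Rightarrow> 'm" and K :: real
    and \<xi> :: "real \<Rightarrow> 'm"
    and U :: "real \<Rightarrow> real" and UT :: real
    and f0 :: 'f and T :: ereal and \<phi>ap :: "real \<Rightarrow> 'f"
    and \<E> \<D> :: "real \<Rightarrow> real" and ET DT :: real
  assumes emb_p: "dense_embedding jp"
    and emb_f: "dense_embedding jf"
    and A_lin: "linear A"
    and A_norm: "\<exists>c C. 0 < c \<and> 0 < C \<and> (\<forall>p. c * (norm (jf (jp p)) + norm (A p)) \<le> norm p
                        \<and> norm p \<le> C * (norm (jf (jp p)) + norm (A p)))"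
    and S_C0: "C0_semigroup S"
    and S_gen: "generates (\<lambda>p. jf (jp p)) A S"
    and SF_restr: "\<forall>t\<ge>0. \<forall>f. jf (SF t f) = S t (jf f)"
    and SF_cont: "continuous_on (UNIV \<times> {0..}) (\<lambda>(f, t). SF t f)"
    and SF_bound: "\<forall>t\<ge>0. \<forall>f. norm (SF t f) \<le> u t * norm f"
    and u_cont: "continuous_on {0..} u" and u_pos: "\<forall>t\<ge>0. u t > 0"
    and Sm_restr: "\<forall>t>0. \<forall>g. jf (Sm t g) = S t g"
    and Sm_cont: "continuous_on (UNIV \<times> {0<..}) (\<lambda>(g, t). Sm t g)"
    and Sm_bound: "\<forall>t>0. \<forall>g. norm (Sm t g) \<le> um t * norm g"
    and um_cont: "continuous_on {0<..} um" and um_pos: "\<forall>t>0. um t > 0"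
    and \<sigma>: "0 < \<sigma>" "\<sigma> \<le> 1"
    and um_sing: "um \<in> O[at_right 0](\<lambda>t. t powr (-(1 - \<sigma>)))"
    and P_bilin: "bilinear P"
    and K_pos: "0 < K"
    and P_bound: "\<forall>f g. norm (P f g) \<le> K * norm f * norm g"
    and \<xi>_lip: "loc_lipschitz_nonneg \<xi>"
    and U_cont: "continuous_on {0..} U"
    and U_nonneg: "\<forall>t\<ge>0. U t \<ge> 0"
    and U_mono: "mono_on {0..} U"
    and U_int: "\<forall>t\<ge>0. integral {0..t} um \<le> U t"
    and U_0: "U 0 = 0"
    and T_pos: "T > 0"
    and UT: "\<forall>r. T = ereal r \<longrightarrow> UT = U r" "T = \<infinity> \<longrightarrow> (U \<longlongrightarrow> UT) at_top"
    and \<phi>ap_cont: "continuous_on (Ico0 T) \<phi>ap"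
    and E_cont: "continuous_on (Icc0 T) \<E>" and E_mono: "mono_on (Icc0 T) \<E>"
    and E_nonneg: "\<forall>t\<in>Icc0 T. \<E> t \<ge> 0"
    and D_cont: "continuous_on (Icc0 T) \<D>" and D_mono: "mono_on (Icc0 T) \<D>"
    and D_nonneg: "\<forall>t\<in>Icc0 T. \<D> t \<ge> 0"
    and ET: "\<forall>r. T = ereal r \<longrightarrow> ET = \<E> r" "T = \<infinity> \<longrightarrow> (\<E> \<longlongrightarrow> ET) at_top"
    and DT: "\<forall>r. T = ereal r \<longrightarrow> DT = \<D> r" "T = \<infinity> \<longrightarrow> (\<D> \<longlongrightarrow> DT) at_top"
    and err_bound: "\<forall>t\<in>Ico0 T.
          norm (\<phi>ap t - SF t f0 - duhamel Sm P \<xi> \<phi>ap t) \<le> \<E> t"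
    and ap_bound: "\<forall>t\<in>Ico0 T. norm (\<phi>ap t) \<le> \<D> t"
    and small: "2 * sqrt (K * UT * ET) + 2 * K * UT * DT \<le> 1"
  shows "(\<exists>\<phi> :: real \<Rightarrow> 'f.
            continuous_on (Ico0 T) \<phi> \<and>
            (\<forall>t\<in>Ico0 T. (\<lambda>s. Sm (t - s) (P (\<phi> s) (\<phi> s) + \<xi> s)) integrable_on {0..t}
                         \<and> \<phi> t = SF t f0 + duhamel Sm P \<xi> \<phi> t) \<and>
            (\<forall>t\<in>Ico0 T. norm (\<phi> t - \<phi>ap t) \<le> bound_R K U \<E> \<D> t))
         \<and> continuous_on (Ico0 T) (bound_R K U \<E> \<D>)
         \<and> mono_on (Ico0 T) (bound_R K U \<E> \<D>)
         \<and> (\<forall>t\<in>Ico0 T. bound_R K U \<E> \<D> t \<ge> 0)"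
  proof -
  have jfl: "linear jf" "inj jf" using emb_f by (auto simp: dense_embedding_def bounded_linear.linear)
  have Slin: "linear (S t)" if "t \<ge> 0" for t
    using S_C0 that by (auto simp: C0_semigroup_def bounded_linear.linear)
  have Sm_lin: "linear (Sm t)" if t: "t > 0" for t
    by (rule Sm_linear_from[OF jfl Slin[of t]]) (use Sm_restr t in auto)
  have um_int: "um integrable_on {0..t}" if "t \<ge> 0" for t
    by (rule um_integrable[OF um_cont um_pos \<sigma>(1) um_sing that])
  define I where "I = Ico0 T"
  have I0: "0 \<in> I" using T_pos by (simp add: I_def Ico0_def zero_ereal_def)
  have Idown: "\<And>t s. t \<in> I \<Longrightarrow> 0 \<le> s \<Longrightarrow> s \<le> t \<Longrightarrow> s \<in> I"
  proof -
    fix t s assume "t \<in> I" "0 \<le> s" "s \<le> t"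
    then have a: "ereal s \<le> ereal t" and b: "ereal t < T" by (auto simp: I_def Ico0_def)
    have "ereal s < T" by (rule le_less_trans[OF a b])
    then show "s \<in> I" using \<open>0 \<le> s\<close> by (simp add: I_def Ico0_def)
  qed
  have Iup: "\<exists>b\<in>I. t < b" if t: "t \<in> I" for t
  proof -
    have "ereal t < T" "0 \<le> t" using t by (auto simp: I_def Ico0_def)
    then obtain z where "ereal t < ereal z" "ereal z < T" using ereal_dense2 by blast
    then show ?thesis using \<open>0 \<le> t\<close> by (intro bexI[of _ z]) (auto simp: I_def Ico0_def)
  qed
  have Ipos: "\<And>t. t \<in> I \<Longrightarrow> 0 \<le> t" by (auto simp: I_def Ico0_def)
  have I_sub: "I \<subseteq> {0..}" by (auto simp: I_def Ico0_def)
  have I_Icc: "I \<subseteq> Icc0 T" by (auto simp: I_def Ico0_def Icc0_def)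
  have Icc_sub: "Icc0 T \<subseteq> {0..}" by (auto simp: Icc0_def)
  have SFc: "continuous_on I (\<lambda>t. SF t f0)"
  proof -
    have "continuous_on I (\<lambda>t. (\<lambda>(f, t). SF t f) (f0, t))"
      by (rule continuous_on_compose2[OF SF_cont]) (use I_sub in \<open>auto intro!: continuous_intros\<close>)
    then show ?thesis by simp
  qed
  have \<xi>c: "continuous_on {0..b} \<xi>" if bI: "b \<in> I" for b
  proof -
    obtain L where "L-lipschitz_on {0..b} \<xi>" using \<xi>_lip Ipos[OF bI] by (auto simp: loc_lipschitz_nonneg_def)
    then show ?thesis by (rule lipschitz_on_continuous_on)
  qed
  have U_monoI: "mono_on (Icc0 T) U" by (rule mono_on_subset[OF U_mono Icc_sub])
  have DUH: "duh Sm um"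
    by unfold_locales (use Sm_cont Sm_bound um_cont um_pos um_int in auto)
  interpret M: mainloc Sm um SF P K \<xi> U f0 I \<phi>ap \<E> \<D> UT ET DT
  proof (rule mainloc.intro[OF DUH], rule mainloc_axioms.intro)
    show "\<And>t. 0 < t \<Longrightarrow> linear (Sm t)" by (rule Sm_lin)
    show "continuous_on I (\<lambda>t. SF t f0)" by (rule SFc)
    show "bilinear P" by (rule P_bilin)
    show "0 < K" by (rule K_pos)
    show "\<And>f g. norm (P f g) \<le> K * norm f * norm g" using P_bound by blast
    show "\<And>b. b \<in> I \<Longrightarrow> continuous_on {0..b} \<xi>" by (rule \<xi>c)
    show "0 \<in> I" by (rule I0)
    show "\<And>t s. t \<in> I \<Longrightarrow> 0 \<le> s \<Longrightarrow> s \<le> t \<Longrightarrow> s \<in> I" by (rule Idown)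
    show "\<And>t. t \<in> I \<Longrightarrow> \<exists>b\<in>I. t < b" by (rule Iup)
    show "\<And>t. t \<in> I \<Longrightarrow> 0 \<le> t" by (rule Ipos)
    show "continuous_on I U" by (rule continuous_on_subset[OF U_cont I_sub])
    show "mono_on I U" by (rule mono_on_subset[OF U_mono I_sub])
    show "\<And>t. t \<in> I \<Longrightarrow> integral {0..t} um \<le> U t" using U_int Ipos by blast
    show "U 0 = 0" by (rule U_0)
    show "\<And>t. t \<in> I \<Longrightarrow> U t \<le> UT" unfolding I_def by (rule le_T[OF U_monoI UT(1) UT(2) T_pos])
    show "continuous_on I \<phi>ap" using \<phi>ap_cont by (simp add: I_def)
    show "continuous_on I \<E>" by (rule continuous_on_subset[OF E_cont I_Icc])
    show "mono_on I \<E>" by (rule mono_on_subset[OF E_mono I_Icc])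
    show "\<And>t. t \<in> I \<Longrightarrow> 0 \<le> \<E> t" using E_nonneg I_Icc by blast
    show "\<And>t. t \<in> I \<Longrightarrow> \<E> t \<le> ET" unfolding I_def by (rule le_T[OF E_mono ET(1) ET(2) T_pos])
    show "continuous_on I \<D>" by (rule continuous_on_subset[OF D_cont I_Icc])
    show "mono_on I \<D>" by (rule mono_on_subset[OF D_mono I_Icc])
    show "\<And>t. t \<in> I \<Longrightarrow> 0 \<le> \<D> t" using D_nonneg I_Icc by blast
    show "\<And>t. t \<in> I \<Longrightarrow> \<D> t \<le> DT" unfolding I_def by (rule le_T[OF D_mono DT(1) DT(2) T_pos])
    show "\<And>t. t \<in> I \<Longrightarrow> norm (\<phi>ap t - SF t f0 - duhamel Sm P \<xi> \<phi>ap t) \<le> \<E> t"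
      using err_bound by (simp add: I_def)
    show "\<And>t. t \<in> I \<Longrightarrow> norm (\<phi>ap t) \<le> \<D> t" using ap_bound by (simp add: I_def)
    show "2 * sqrt (K * UT * ET) + 2 * K * UT * DT \<le> 1" by (rule small)
  qed
  have R: "M.R = bound_R K U \<E> \<D>" by (simp add: M.R_def)
  show ?thesis
    using M.main_result M.R_props M.R_nonneg unfolding R I_def[symmetric] by blast
qed

end
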